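(* Let $\mathcal C=\mathcal C(I,A,(\rho_i)_{i\in I},(C^a)_{a\in A})$ be a connected Cartan scheme and $\mathcal R=\mathcal R(\mathcal C,(R^a)_{a\in A})$ a root system of type $\mathcal C$. For $a\in A$ let $(R^a)^{\mathrm{re}}=\{\omega(\alpha_i)\mid\omega\in\mathrm{Hom}(b,a),\ b\in A,\ i\in I\}$. The following are equivalent: (1) $R^a$ is finite for all $a\in A$; (2) $R^a$ is finite for at least one $a\in A$; (3) $(R^a)^{\mathrm{re}}$ is finite for all $a\in A$; (4) the Weyl groupoid $\mathcal W(\mathcal C)$ is finite (has finitely many morphisms).
   Context: Let $I$ be a nonempty finite set and $\{\alpha_i\mid i\in I\}$ the standard basis of $\mathbb Z^I$; $\mathbb N_0=\{0,1,2,\dots\}$. A generalized Cartan matrix is $C=(c_{ij})_{i,j\in I}\in\mathbb Z^{I\times I}$ with $c_{ii}=2$, $c_{jk}\le0$ for $j\ne k$, and $c_{ij}=0\Rightarrow c_{ji}=0$. A Cartan scheme $\mathcal C=\mathcal C(I,A,(\rho_i)_{i\in I},(C^a)_{a\in A})$ consists of a nonempty set $A$, maps $\rho_i:A\to A$ and generalized Cartan matrices $C^a=(c^a_{jk})_{j,k\in I}$ such that (C1) $\rho_i^2=\mathrm{id}$ and (C2) $c^a_{ij}=c^{\rho_i(a)}_{ij}$ for all $a\in A$, $i,j\in I$. It is connected if the group generated by the $\rho_i$ acts transitively on $A$. For $i\in I$, $a\in A$ let $\sigma_i^a\in\mathrm{Aut}(\mathbb Z^I)$, $\sigma_i^a(\alpha_j)=\alpha_j-c^a_{ij}\alpha_i$.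 The Weyl groupoid $\mathcal W(\mathcal C)$ has object set $A$; $\mathrm{Hom}(a,b)$ consists of the triples $(b,f,a)$ with $f=\sigma_{i_n}^{a_{n-1}}\cdots\sigma_{i_1}^{a_0}$, where $n\ge0$, $i_1,\dots,i_n\in I$, $a_0=a$, $a_k=\rho_{i_k}(a_{k-1})$, $a_n=b$ (one writes $\omega(v)=f(v)$ for $\omega=(b,f,a)$); composition is multiplication in $\mathrm{Aut}(\mathbb Z^I)$. A root system of type $\mathcal C$ is a family $\mathcal R=\mathcal R(\mathcal C,(R^a)_{a\in A})$ of subsets $R^a\subset\mathbb Z^I$ such that, writing $R^a_+=R^a\cap\mathbb N_0^I$ and $m^a_{i,j}=|R^a\cap(\mathbb N_0\alpha_i+\mathbb N_0\alpha_j)|$, for all $a\in A$, $i,j\in I$: (R1) $R^a=R^a_+\cup(-R^a_+)$; (R2) $R^a\cap\mathbb Z\alpha_i=\{\alpha_i,-\alpha_i\}$; (R3) $\sigma_i^a(R^a)=R^{\rho_i(a)}$; (R4) if $i\neq j$ and $m^a_{i,j}$ is finite then $(\rho_i\rho_j)^{m^a_{i,j}}(a)=a$. *)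

theory Defs
  imports Main
begin

text \<open>Elements of Z^I are represented as functions 'i => int vanishing outside I.\<close>

definition ZI :: "'i set \<Rightarrow> ('i \<Rightarrow> int) set" where
  "ZI I = {v. \<forall>k. k \<notin> I \<longrightarrow> v k = 0}"

definition alpha :: "'i \<Rightarrow> ('i \<Rightarrow> int)" where
  "alpha i = (\<lambda>j. if j = i then 1 else 0)"

definition gen_cartan_matrix :: "'i set \<Rightarrow> ('i \<Rightarrow> 'i \<Rightarrow> int) \<Rightarrow> bool" where
  "gen_cartan_matrix I c \<longleftrightarrow>
     (\<forall>i\<in>I. c i i = 2) \<and>
     (\<forall>j\<in>I. \<forall>k\<in>I. j \<noteq> k \<longrightarrow> c j k \<le> 0) \<and>
     (\<forall>i\<in>I. \<forall>j\<in>I. c i j = 0 \<longrightarrow> c j i = 0)"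

definition cartan_scheme ::
  "'i set \<Rightarrow> 'a set \<Rightarrow> ('i \<Rightarrow> 'a \<Rightarrow> 'a) \<Rightarrow> ('a \<Rightarrow> 'i \<Rightarrow> 'i \<Rightarrow> int) \<Rightarrow> bool" where
  "cartan_scheme I A rho C \<longleftrightarrow>
     finite I \<and> I \<noteq> {} \<and> A \<noteq> {} \<and>
     (\<forall>i\<in>I. \<forall>a\<in>A. rho i a \<in> A) \<and>
     (\<forall>a\<in>A. gen_cartan_matrix I (C a)) \<and>
     (\<forall>i\<in>I. \<forall>a\<in>A. rho i (rho i a) = a) \<and>
     (\<forall>a\<in>A. \<forall>i\<in>I. \<forall>j\<in>I. C a i j = C (rho i a) i j)"

definition connected_cs :: "'i set \<Rightarrow> 'a set \<Rightarrow> ('i \<Rightarrow> 'a \<Rightarrow> 'a) \<Rightarrow> bool" where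
  "connected_cs I A rho \<longleftrightarrow>
     (\<forall>a\<in>A. \<forall>b\<in>A. (a, b) \<in> {(x, rho i x) | x i. x \<in> A \<and> i \<in> I}\<^sup>*)"

text \<open>sigma_i^a (alpha_j) = alpha_j - c^a_ij alpha_i, extended linearly.\<close>
definition sigma :: "'i set \<Rightarrow> ('a \<Rightarrow> 'i \<Rightarrow> 'i \<Rightarrow> int) \<Rightarrow> 'i \<Rightarrow> 'a \<Rightarrow> ('i \<Rightarrow> int) \<Rightarrow> ('i \<Rightarrow> int)" where
  "sigma I C i a v = (\<lambda>k. if k = i then v i - (\<Sum>j\<in>I. C a i j * v j) else v k)"

text \<open>Morphisms of the Weyl groupoid: triples (b, f, a) with f a product of sigma's
  along a path from a to b.\<close>
inductive_set weyl_morphisms ::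
  "'i set \<Rightarrow> 'a set \<Rightarrow> ('i \<Rightarrow> 'a \<Rightarrow> 'a) \<Rightarrow> ('a \<Rightarrow> 'i \<Rightarrow> 'i \<Rightarrow> int)
     \<Rightarrow> ('a \<times> (('i \<Rightarrow> int) \<Rightarrow> ('i \<Rightarrow> int)) \<times> 'a) set"
  for I A rho C where
  idm: "a \<in> A \<Longrightarrow> (a, id, a) \<in> weyl_morphisms I A rho C"
| step: "(b, f, a) \<in> weyl_morphisms I A rho C \<Longrightarrow> i \<in> I \<Longrightarrow>
          (rho i b, sigma I C i b \<circ> f, a) \<in> weyl_morphisms I A rho C"

definition Hom ::
  "'i set \<Rightarrow> 'a set \<Rightarrow> ('i \<Rightarrow> 'a \<Rightarrow> 'a) \<Rightarrow> ('a \<Rightarrow> 'i \<Rightarrow> 'i \<Rightarrow> int) \<Rightarrow> 'a \<Rightarrow> 'a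
     \<Rightarrow> ('a \<times> (('i \<Rightarrow> int) \<Rightarrow> ('i \<Rightarrow> int)) \<times> 'a) set" where
  "Hom I A rho C a b = {(b', f, a'). (b', f, a') \<in> weyl_morphisms I A rho C \<and> a' = a \<and> b' = b}"

definition pos_roots :: "('i \<Rightarrow> int) set \<Rightarrow> ('i \<Rightarrow> int) set" where
  "pos_roots R = {v \<in> R. \<forall>k. 0 \<le> v k}"

definition m_ij :: "('i \<Rightarrow> int) set \<Rightarrow> 'i \<Rightarrow> 'i \<Rightarrow> ('i \<Rightarrow> int) set" where
  "m_ij R i j = R \<inter> {(\<lambda>k. x * alpha i k + y * alpha j k) | x y. x \<ge> 0 \<and> y \<ge> 0}"

definition root_system ::
  "'i set \<Rightarrow> 'a set \<Rightarrow> ('i \<Rightarrow> 'a \<Rightarrow> 'a) \<Rightarrow> ('a \<Rightarrow> 'i \<Rightarrow> 'i \<Rightarrow> int)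
     \<Rightarrow> ('a \<Rightarrow> ('i \<Rightarrow> int) set) \<Rightarrow> bool" where
  "root_system I A rho C R \<longleftrightarrow>
     cartan_scheme I A rho C \<and>
     (\<forall>a\<in>A. R a \<subseteq> ZI I) \<and>
     (\<forall>a\<in>A. R a = pos_roots (R a) \<union> uminus ` pos_roots (R a)) \<and>
     (\<forall>a\<in>A. \<forall>i\<in>I. R a \<inter> {(\<lambda>k. z * alpha i k) | z. True} = {alpha i, - alpha i}) \<and>
     (\<forall>a\<in>A. \<forall>i\<in>I. sigma I C i a ` R a = R (rho i a)) \<and>
     (\<forall>a\<in>A. \<forall>i\<in>I. \<forall>j\<in>I. i \<noteq> j \<longrightarrow> finite (m_ij (R a) i j) \<longrightarrow>
        ((rho i \<circ> rho j) ^^ card (m_ij (R a) i j)) a = a)"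

definition real_roots ::
  "'i set \<Rightarrow> 'a set \<Rightarrow> ('i \<Rightarrow> 'a \<Rightarrow> 'a) \<Rightarrow> ('a \<Rightarrow> 'i \<Rightarrow> 'i \<Rightarrow> int) \<Rightarrow> 'a
     \<Rightarrow> ('i \<Rightarrow> int) set" where
  "real_roots I A rho C a =
     {f (alpha i) | f b i. b \<in> A \<and> (a, f, b) \<in> Hom I A rho C b a \<and> i \<in> I}"

end

theory Submission
  imports Defs "HOL-Library.FuncSet"
begin


primrec tgt :: "('i \<Rightarrow> 'a \<Rightarrow> 'a) \<Rightarrow> 'a \<Rightarrow> 'i list \<Rightarrow> 'a" where
  "tgt rho a [] = a"
| "tgt rho a (i # w) = rho i (tgt rho a w)"

primrec fn :: "'i set \<Rightarrow> ('i \<Rightarrow> 'a \<Rightarrow> 'a) \<Rightarrow> ('a \<Rightarrow> 'i \<Rightarrow> 'i \<Rightarrow> int) \<Rightarrow> 'a \<Rightarrow> 'i list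
   \<Rightarrow> ('i \<Rightarrow> int) \<Rightarrow> ('i \<Rightarrow> int)" where
  "fn I rho C a [] = id"
| "fn I rho C a (i # w) = sigma I C i (tgt rho a w) \<circ> fn I rho C a w"

definition addv :: "('i \<Rightarrow> int) \<Rightarrow> ('i \<Rightarrow> int) \<Rightarrow> ('i \<Rightarrow> int)" where
  "addv u v = (\<lambda>k. u k + v k)"
definition smul :: "int \<Rightarrow> ('i \<Rightarrow> int) \<Rightarrow> ('i \<Rightarrow> int)" where
  "smul c u = (\<lambda>k. c * u k)"

lemma neg_apply: "(- (v::'i\<Rightarrow>int)) k = - v k" by simp
lemma neg_neg[simp]: "- (- (v::'i\<Rightarrow>int)) = v" by (rule ext) simp
lemma neg_eq_iff[simp]: "(- (v::'i\<Rightarrow>int) = - w) = (v = w)" by (metis neg_neg)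

locale rs =
  fixes I :: "'i set" and A :: "'a set" and rho :: "'i \<Rightarrow> 'a \<Rightarrow> 'a"
    and C :: "'a \<Rightarrow> 'i \<Rightarrow> 'i \<Rightarrow> int" and R :: "'a \<Rightarrow> ('i \<Rightarrow> int) set"
  assumes RS: "root_system I A rho C R"
begin

abbreviation T where "T \<equiv> tgt rho"
abbreviation F where "F \<equiv> fn I rho C"
abbreviation sg where "sg \<equiv> sigma I C"
definition Rp where "Rp x = pos_roots (R x)"

lemma CS: "cartan_scheme I A rho C" using RS unfolding root_system_def by (rule conjunct1)
lemmas rsp = RS[unfolded root_system_def, THEN conjunct2]
lemmas csp = CS[unfolded cartan_scheme_def]
lemma finI: "finite I" using csp by (rule conjunct1)
lemma Ine: "I \<noteq> {}" using csp[THEN conjunct2] by (rule conjunct1)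
lemma Ane: "A \<noteq> {}" using csp[THEN conjunct2, THEN conjunct2] by (rule conjunct1)
lemma rhoA: "i \<in> I \<Longrightarrow> a \<in> A \<Longrightarrow> rho i a \<in> A"
  using csp[THEN conjunct2, THEN conjunct2, THEN conjunct2, THEN conjunct1] by blast
lemma gcm: "a \<in> A \<Longrightarrow> gen_cartan_matrix I (C a)"
  using csp[THEN conjunct2, THEN conjunct2, THEN conjunct2, THEN conjunct2, THEN conjunct1] by blast
lemma rho2: "i \<in> I \<Longrightarrow> a \<in> A \<Longrightarrow> rho i (rho i a) = a"
  using csp[THEN conjunct2, THEN conjunct2, THEN conjunct2, THEN conjunct2, THEN conjunct2, THEN conjunct1] by blast
lemma C2: "a \<in> A \<Longrightarrow> i \<in> I \<Longrightarrow> j \<in> I \<Longrightarrow> C (rho i a) i j = C a i j"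
  using csp[THEN conjunct2, THEN conjunct2, THEN conjunct2, THEN conjunct2, THEN conjunct2, THEN conjunct2] by metis
lemma cii: "a \<in> A \<Longrightarrow> i \<in> I \<Longrightarrow> C a i i = 2"
  using gcm unfolding gen_cartan_matrix_def by blast
lemma RZI: "a \<in> A \<Longrightarrow> v \<in> R a \<Longrightarrow> k \<notin> I \<Longrightarrow> v k = 0"
  using rsp[THEN conjunct1] unfolding ZI_def by blast
lemma R1: "a \<in> A \<Longrightarrow> R a = Rp a \<union> uminus ` Rp a"
  using rsp[THEN conjunct2, THEN conjunct1] unfolding Rp_def by blast
lemma R2: "a \<in> A \<Longrightarrow> i \<in> I \<Longrightarrow> R a \<inter> {(\<lambda>k. z * alpha i k) | z. True} = {alpha i, - alpha i}"
  using rsp[THEN conjunct2, THEN conjunct2, THEN conjunct1] by blast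
lemma R3: "a \<in> A \<Longrightarrow> i \<in> I \<Longrightarrow> sg i a ` R a = R (rho i a)"
  using rsp[THEN conjunct2, THEN conjunct2, THEN conjunct2, THEN conjunct1] by blast
lemma R4: "a \<in> A \<Longrightarrow> i \<in> I \<Longrightarrow> j \<in> I \<Longrightarrow> i \<noteq> j \<Longrightarrow> finite (m_ij (R a) i j) \<Longrightarrow>
    ((rho i \<circ> rho j) ^^ card (m_ij (R a) i j)) a = a"
  using rsp[THEN conjunct2, THEN conjunct2, THEN conjunct2, THEN conjunct2] by blast

lemma Rp_R: "v \<in> Rp a \<Longrightarrow> v \<in> R a" unfolding Rp_def pos_roots_def by auto
lemma Rp_nn: "v \<in> Rp a \<Longrightarrow> 0 \<le> v k" unfolding Rp_def pos_roots_def by auto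
lemma Rp_I: "v \<in> R a \<Longrightarrow> (\<And>k. 0 \<le> v k) \<Longrightarrow> v \<in> Rp a" unfolding Rp_def pos_roots_def by auto

lemma alpha_R: "a \<in> A \<Longrightarrow> i \<in> I \<Longrightarrow> alpha i \<in> R a" using R2 by blast
lemma malpha_R: "a \<in> A \<Longrightarrow> i \<in> I \<Longrightarrow> - alpha i \<in> R a" using R2 by blast
lemma alpha_Rp: "a \<in> A \<Longrightarrow> i \<in> I \<Longrightarrow> alpha i \<in> Rp a"
  by (rule Rp_I[OF alpha_R]) (auto simp: alpha_def)

lemma zero_notR: assumes "a \<in> A" shows "(\<lambda>k. 0::int) \<notin> R a"
proof
  assume z: "(\<lambda>k. 0::int) \<in> R a"
  obtain i where i: "i \<in> I" using Ine by auto
  have m: "(\<lambda>k. 0::int) \<in> {(\<lambda>k. z * alpha i k) | z. True}" by (rule CollectI, rule exI[of _ 0]) auto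
  have "(\<lambda>k. 0::int) \<in> R a \<inter> {(\<lambda>k. z * alpha i k) | z. True}" using z m by blast
  hence "(\<lambda>k. 0::int) \<in> {alpha i, - alpha i}" using R2[OF assms i] by blast
  hence "(\<lambda>k. 0::int) = alpha i \<or> (\<lambda>k. 0::int) = - alpha i" by blast
  thus False
  proof
    assume "(\<lambda>k. 0::int) = alpha i" hence "(0::int) = alpha i i" by (metis)
    thus False by (simp add: alpha_def)
  next
    assume "(\<lambda>k. 0::int) = - alpha i" hence "(0::int) = (- alpha i) i" by (metis)
    thus False by (simp add: alpha_def)
  qed
qed

lemma R_cases: assumes "a \<in> A" "v \<in> R a" shows "v \<in> Rp a \<or> - v \<in> Rp a"
proof -
  have "v \<in> Rp a \<or> v \<in> uminus ` Rp a" using R1[OF assms(1)] assms(2) by blast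
  thus ?thesis by (auto simp: image_iff)
qed

lemma R_neg: assumes "a \<in> A" "v \<in> R a" shows "- v \<in> R a"
proof -
  have "v \<in> Rp a \<or> - v \<in> Rp a" using R_cases[OF assms] .
  thus ?thesis
  proof
    assume "v \<in> Rp a" hence "- v \<in> uminus ` Rp a" by blast
    thus ?thesis using R1[OF assms(1)] by blast
  next
    assume "- v \<in> Rp a" thus ?thesis using Rp_R by blast
  qed
qed

lemma not_both: assumes "a \<in> A" "v \<in> R a" "\<And>k. 0 \<le> v k" "\<And>k. v k \<le> 0" shows False
proof -
  have "v = (\<lambda>k. 0)" using assms(3,4) by (intro ext) (meson order.antisym)
  thus False using zero_notR[OF assms(1)] assms(2) by simp
qed

lemma Rp_neg_not: "a \<in> A \<Longrightarrow> v \<in> Rp a \<Longrightarrow> - v \<in> Rp a \<Longrightarrow> False"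
proof -
  assume a: "a \<in> A" "v \<in> Rp a" "- v \<in> Rp a"
  have "\<And>k. v k \<le> 0" using Rp_nn[OF a(3)] by (simp add: neg_apply)
  thus False using not_both[OF a(1) Rp_R[OF a(2)] Rp_nn[OF a(2)]] by blast
qed

lemma negR_notRp_pos: "a \<in> A \<Longrightarrow> v \<in> R a \<Longrightarrow> v \<notin> Rp a \<Longrightarrow> - v \<in> Rp a"
  using R_cases by blast

end


context rs begin

lemma sg_other: "k \<noteq> i \<Longrightarrow> sg i x v k = v k" unfolding sigma_def by simp
lemma sg_i: "sg i x v i = v i - (\<Sum>j\<in>I. C x i j * v j)" unfolding sigma_def by simp

lemma sg_add: "sg i x (addv u v) = addv (sg i x u) (sg i x v)"
  unfolding sigma_def addv_def by (rule ext) (simp add: sum.distrib distrib_left)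
lemma sg_smul: "sg i x (smul c u) = smul c (sg i x u)"
  unfolding sigma_def smul_def by (rule ext) (simp add: sum_distrib_left right_diff_distrib mult.left_commute)
lemma sg_neg: "sg i x (- u) = - sg i x u"
  unfolding sigma_def by (rule ext) (simp add: sum_negf)
lemma sg_zero: "sg i x (\<lambda>k. 0) = (\<lambda>k. 0)"
  unfolding sigma_def by (rule ext) simp

lemma sg_fixI: "i \<in> I \<Longrightarrow> (\<And>k. k \<in> I \<Longrightarrow> u k = 0) \<Longrightarrow> sg i x u = u"
  unfolding sigma_def by (rule ext) simp

lemma sum_remove_i: "i \<in> I \<Longrightarrow> (\<Sum>j\<in>I. g j) = g i + (\<Sum>j\<in>I - {i}. g j)"
  using finI by (simp add: sum.remove)

lemma sg_invol: assumes i: "i \<in> I" and x: "x \<in> A" shows "sg i (rho i x) (sg i x v) = v"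
proof (rule ext)
  fix k
  show "sg i (rho i x) (sg i x v) k = v k"
  proof (cases "k = i")
    case False thus ?thesis by (simp add: sg_other)
  next
    case True
    define S' where "S' = (\<Sum>j\<in>I - {i}. C x i j * v j)"
    have s1: "(\<Sum>j\<in>I. C x i j * v j) = 2 * v i + S'"
      unfolding S'_def using sum_remove_i[OF i, of "\<lambda>j. C x i j * v j"] cii[OF x i] by simp
    have e1: "sg i x v i = - v i - S'" using s1 by (simp add: sg_i)
    have s2: "(\<Sum>j\<in>I - {i}. C (rho i x) i j * sg i x v j) = S'"
      unfolding S'_def by (rule sum.cong) (auto simp: sg_other C2[OF x i])
    have s3: "(\<Sum>j\<in>I. C (rho i x) i j * sg i x v j) = 2 * sg i x v i + S'"
      using sum_remove_i[OF i, of "\<lambda>j. C (rho i x) i j * sg i x v j"] s2 C2[OF x i i] cii[OF x i] by simp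
    show ?thesis using True s3 e1 by (simp add: sg_i)
  qed
qed

lemma sg_inj: "i \<in> I \<Longrightarrow> x \<in> A \<Longrightarrow> inj (sg i x)"
  by (metis injI sg_invol)

lemma sg_alpha: assumes i: "i \<in> I" and x: "x \<in> A" shows "sg i x (alpha i) = - alpha i"
proof (rule ext)
  fix k
  have "(\<Sum>j\<in>I. C x i j * alpha i j) = (\<Sum>j\<in>I. if j = i then C x i j else 0)"
    by (rule sum.cong) (auto simp: alpha_def)
  also have "\<dots> = C x i i" using i finI by simp
  finally have "(\<Sum>j\<in>I. C x i j * alpha i j) = 2" using cii[OF x i] by simp
  thus "sg i x (alpha i) k = (- alpha i) k"
    by (cases "k = i") (auto simp: sg_i sg_other alpha_def)
qed

lemma sg_malpha: assumes i: "i \<in> I" and x: "x \<in> A" shows "sg i x (- alpha i) = alpha i"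
  using sg_alpha[OF i x] by (simp add: sg_neg)

lemma sg_pos: assumes i: "i \<in> I" and x: "x \<in> A" and b: "\<beta> \<in> Rp x" and ne: "\<beta> \<noteq> alpha i"
  shows "sg i x \<beta> \<in> Rp (rho i x)"
proof -
  have bR: "\<beta> \<in> R x" using Rp_R[OF b] .
  have sR: "sg i x \<beta> \<in> R (rho i x)" using R3[OF x i] bR by blast
  have "\<exists>k. k \<noteq> i \<and> \<beta> k > 0"
  proof (rule ccontr)
    assume n: "\<not> ?thesis"
    have z: "\<beta> k = 0" if k: "k \<noteq> i" for k
    proof -
      have "\<not> \<beta> k > 0" using n k by blast
      moreover have "\<beta> k \<ge> 0" by (rule Rp_nn[OF b])
      ultimately show "\<beta> k = 0" by simp
    qed
    have "\<beta> = (\<lambda>k. \<beta> i * alpha i k)" by (rule ext) (auto simp: alpha_def z)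
    hence "\<beta> \<in> R x \<inter> {(\<lambda>k. z * alpha i k) | z. True}" using bR by blast
    hence "\<beta> = alpha i \<or> \<beta> = - alpha i" using R2[OF x i] by blast
    moreover have "\<beta> \<noteq> - alpha i"
    proof
      assume "\<beta> = - alpha i" hence "\<beta> i = -1" by (simp add: alpha_def)
      thus False using Rp_nn[OF b, of i] by simp
    qed
    ultimately show False using ne by blast
  qed
  then obtain k where k: "k \<noteq> i" "\<beta> k > 0" by blast
  have sk: "sg i x \<beta> k > 0" using k by (simp add: sg_other)
  show ?thesis
  proof (rule ccontr)
    assume "sg i x \<beta> \<notin> Rp (rho i x)"
    hence "- sg i x \<beta> \<in> Rp (rho i x)" using R_cases[OF rhoA[OF i x] sR] by blast
    hence "(- sg i x \<beta>) k \<ge> 0" by (rule Rp_nn)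
    thus False using sk by simp
  qed
qed

lemma sg_S: assumes i: "i \<in> I" and x: "x \<in> A" and b: "\<beta> \<in> R x"
  shows "sg i x \<beta> \<in> Rp (rho i x) \<longleftrightarrow> (\<beta> \<in> Rp x \<and> \<beta> \<noteq> alpha i) \<or> \<beta> = - alpha i"
proof
  assume s: "sg i x \<beta> \<in> Rp (rho i x)"
  show "(\<beta> \<in> Rp x \<and> \<beta> \<noteq> alpha i) \<or> \<beta> = - alpha i"
  proof (rule ccontr)
    assume n: "\<not> ?thesis"
    show False
    proof (cases "\<beta> = alpha i")
      case True
      hence "- alpha i \<in> Rp (rho i x)" using s sg_alpha[OF i x] by simp
      thus False using Rp_neg_not[OF rhoA[OF i x] alpha_Rp[OF rhoA[OF i x] i]] by simp
    next
      case False
      hence "\<beta> \<notin> Rp x" using n by blast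
      hence mb: "- \<beta> \<in> Rp x" using R_cases[OF x b] by blast
      have "- \<beta> \<noteq> alpha i" using n by (metis neg_neg)
      hence "sg i x (- \<beta>) \<in> Rp (rho i x)" using sg_pos[OF i x mb] by blast
      hence "- sg i x \<beta> \<in> Rp (rho i x)" by (simp add: sg_neg)
      thus False using Rp_neg_not[OF rhoA[OF i x] s] by blast
    qed
  qed
next
  assume "(\<beta> \<in> Rp x \<and> \<beta> \<noteq> alpha i) \<or> \<beta> = - alpha i"
  thus "sg i x \<beta> \<in> Rp (rho i x)"
  proof
    assume "\<beta> \<in> Rp x \<and> \<beta> \<noteq> alpha i" thus ?thesis using sg_pos[OF i x] by blast
  next
    assume "\<beta> = - alpha i" thus ?thesis using sg_malpha[OF i x] alpha_Rp[OF rhoA[OF i x] i] by simp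
  qed
qed

lemma T_A: "x \<in> A \<Longrightarrow> set w \<subseteq> I \<Longrightarrow> T x w \<in> A"
  by (induction w) (auto simp: rhoA)

lemma T_append: "T x (w2 @ w1) = T (T x w1) w2"
  by (induction w2) auto
lemma F_append: "F x (w2 @ w1) = F (T x w1) w2 \<circ> F x w1"
  by (induction w2) (auto simp: T_append)

lemma F_add: "F x w (addv u v) = addv (F x w u) (F x w v)"
  by (induction w) (auto simp: sg_add)
lemma F_smul: "F x w (smul c u) = smul c (F x w u)"
  by (induction w) (auto simp: sg_smul)
lemma neg_smul: "- v = smul (-1) v" by (rule ext) (simp add: smul_def)
lemma F_neg: "F x w (- u) = - F x w u"
  by (simp only: neg_smul F_smul)
lemma F_zero: "F x w (\<lambda>k. 0) = (\<lambda>k. 0)"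
  by (induction w) (auto simp: sg_zero)
lemma F_other: "(\<And>i. i \<in> set w \<Longrightarrow> i \<noteq> l) \<Longrightarrow> F x w v l = v l"
proof (induction w)
  case Nil thus ?case by simp
next
  case (Cons a w)
  have "a \<noteq> l" using Cons.prems by simp
  hence "sg a (T x w) (F x w v) l = F x w v l" by (metis sg_other)
  thus ?case using Cons by simp
qed
lemma F_fixI: "set w \<subseteq> I \<Longrightarrow> (\<And>k. k \<in> I \<Longrightarrow> u k = 0) \<Longrightarrow> F x w u = u"
  by (induction w) (auto simp: sg_fixI)

lemma F_R: "x \<in> A \<Longrightarrow> set w \<subseteq> I \<Longrightarrow> F x w ` R x = R (T x w)"
proof (induction w)
  case Nil thus ?case by simp
next
  case (Cons i w)
  have "F x (i # w) ` R x = sg i (T x w) ` (F x w ` R x)" by (simp add: image_comp)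
  also have "\<dots> = R (T x (i # w))" using Cons R3[OF T_A[of x w] ] by auto
  finally show ?case .
qed

lemma F_inj: "x \<in> A \<Longrightarrow> set w \<subseteq> I \<Longrightarrow> inj (F x w)"
proof (induction w)
  case Nil thus ?case by simp
next
  case (Cons i w)
  hence "inj (sg i (T x w) \<circ> F x w)" using sg_inj[of i "T x w"] T_A[of x w] by (auto intro: inj_compose)
  thus ?case by (simp add: comp_def)
qed

lemma T_rev: "x \<in> A \<Longrightarrow> set w \<subseteq> I \<Longrightarrow> T (T x w) (rev w) = x"
proof (induction w)
  case Nil thus ?case by simp
next
  case (Cons i w)
  have t: "T x w \<in> A" using Cons T_A by auto
  have "T (T x (i # w)) (rev (i # w)) = T (rho i (rho i (T x w))) (rev w)"
    by (simp add: T_append)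
  also have "\<dots> = T (T x w) (rev w)" using rho2[OF _ t] Cons by simp
  finally show ?case using Cons by simp
qed

lemma F_rev: "x \<in> A \<Longrightarrow> set w \<subseteq> I \<Longrightarrow> F (T x w) (rev w) \<circ> F x w = id"
proof (induction w)
  case Nil thus ?case by simp
next
  case (Cons i w)
  have t: "T x w \<in> A" using Cons T_A by auto
  have i: "i \<in> I" using Cons by simp
  have IH0: "F (T x w) (rev w) \<circ> F x w = id" using Cons.IH Cons.prems by (simp add: comp_def id_def)
  have IH: "F (T x w) (rev w) (F x w v) = v" for v
  proof -
    have "(F (T x w) (rev w) \<circ> F x w) v = id v" using IH0 by simp
    thus ?thesis by simp
  qed
  show ?case
  proof (rule ext)
    fix v
    have "(F (T x (i # w)) (rev (i # w)) \<circ> F x (i # w)) v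
        = F (T x w) (rev w) (sg i (rho i (T x w)) (sg i (T x w) (F x w v)))"
      by (simp add: F_append T_append rho2[OF i t])
    also have "\<dots> = v" using sg_invol[OF i t] IH by simp
    finally show "(F (T x (i # w)) (rev (i # w)) \<circ> F x (i # w)) v = id v" by simp
  qed
qed

lemma F_rev_ap: assumes "x \<in> A" "set w \<subseteq> I" shows "F (T x w) (rev w) (F x w v) = v"
proof -
  have "(F (T x w) (rev w) \<circ> F x w) v = id v" using F_rev[OF assms] by simp
  thus ?thesis by simp
qed

lemma F_rev2: assumes "x \<in> A" "set w \<subseteq> I" shows "F x w (F (T x w) (rev w) v) = v"
proof -
  have y: "T x w \<in> A" using T_A assms by blast
  have "F (T (T x w) (rev w)) (rev (rev w)) (F (T x w) (rev w) v) = v"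
    by (rule F_rev_ap[OF y]) (use assms in auto)
  thus ?thesis using T_rev[OF assms] by simp
qed

lemma F_sum: "finite S \<Longrightarrow> F x w (\<lambda>k. \<Sum>l\<in>S. g l k) = (\<lambda>k. \<Sum>l\<in>S. F x w (g l) k)"
proof (induction S rule: finite_induct)
  case empty thus ?case using F_zero by simp
next
  case (insert a S)
  have "(\<lambda>k. \<Sum>l\<in>insert a S. g l k) = addv (g a) (\<lambda>k. \<Sum>l\<in>S. g l k)"
    using insert by (simp add: addv_def)
  hence "F x w (\<lambda>k. \<Sum>l\<in>insert a S. g l k) = addv (F x w (g a)) (\<lambda>k. \<Sum>l\<in>S. F x w (g l) k)"
    using insert by (simp add: F_add)
  thus ?case using insert by (simp add: addv_def)
qed

lemma F_lin2: "F x w (\<lambda>k. p * u k + q * v k) = (\<lambda>k. p * F x w u k + q * F x w v k)"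
proof -
  have e: "(\<lambda>k. p * u k + q * v k) = addv (smul p u) (smul q v)" by (simp add: addv_def smul_def)
  have "F x w (addv (smul p u) (smul q v)) = addv (smul p (F x w u)) (smul q (F x w v))"
    by (simp only: F_add F_smul)
  thus ?thesis unfolding e by (simp add: addv_def smul_def)
qed

lemma vec_decomp: "(\<lambda>k. if k \<in> I then v k else 0) = (\<lambda>k. \<Sum>l\<in>I. v l * alpha l k)"
proof (rule ext)
  fix k
  have "(\<Sum>l\<in>I. v l * alpha l k) = (\<Sum>l\<in>I. if l = k then v l else 0)"
    by (rule sum.cong) (auto simp: alpha_def)
  also have "\<dots> = (if k \<in> I then v k else 0)" using finI by simp
  finally show "(if k \<in> I then v k else 0) = (\<Sum>l\<in>I. v l * alpha l k)" by simp
qed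

lemma F_expand: assumes "set w \<subseteq> I"
  shows "F x w v = (\<lambda>k. (\<Sum>l\<in>I. v l * F x w (alpha l) k) + (if k \<in> I then 0 else v k))"
proof -
  have "v = addv (\<lambda>k. \<Sum>l\<in>I. v l * alpha l k) (\<lambda>k. if k \<in> I then 0 else v k)"
  proof (rule ext)
    fix k
    have e: "(\<Sum>l\<in>I. v l * alpha l k) = (if k \<in> I then v k else 0)"
      using fun_cong[OF vec_decomp[of v], of k] by simp
    show "v k = addv (\<lambda>k. \<Sum>l\<in>I. v l * alpha l k) (\<lambda>k. if k \<in> I then 0 else v k) k"
      unfolding addv_def e by simp
  qed
  hence "F x w v = addv (F x w (\<lambda>k. \<Sum>l\<in>I. v l * alpha l k)) (F x w (\<lambda>k. if k \<in> I then 0 else v k))"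
    by (metis F_add)
  also have "F x w (\<lambda>k. if k \<in> I then 0 else v k) = (\<lambda>k. if k \<in> I then 0 else v k)"
    by (rule F_fixI[OF assms]) simp
  also have "F x w (\<lambda>k. \<Sum>l\<in>I. v l * alpha l k) = (\<lambda>k. \<Sum>l\<in>I. F x w (smul (v l) (alpha l)) k)"
    using F_sum[OF finI, of x w "\<lambda>l k. v l * alpha l k"] by (simp add: smul_def)
  also have "(\<lambda>k. \<Sum>l\<in>I. F x w (smul (v l) (alpha l)) k) = (\<lambda>k. \<Sum>l\<in>I. v l * F x w (alpha l) k)"
    by (simp only: F_smul) (simp add: smul_def)
  finally show ?thesis by (simp add: addv_def)
qed

lemma F_det: assumes "set w \<subseteq> I" "set w' \<subseteq> I" "\<And>l. l \<in> I \<Longrightarrow> F x w (alpha l) = F y w' (alpha l)"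
  shows "F x w = F y w'"
proof (rule ext)
  fix v
  show "F x w v = F y w' v" using F_expand[OF assms(1), of x v] F_expand[OF assms(2), of y v] assms(3)
    by simp
qed

end


context rs begin

definition N where "N x w = {\<alpha> \<in> Rp x. F x w \<alpha> \<notin> Rp (T x w)}"

lemma step_cases: assumes x: "x \<in> A" and w: "set w \<subseteq> I" and i: "i \<in> I"
  shows "(\<exists>\<gamma>\<in>Rp x. F x w \<gamma> = alpha i) \<or> (\<exists>\<gamma>\<in>Rp x. F x w \<gamma> = - alpha i)"
proof -
  have "alpha i \<in> R (T x w)" using alpha_R[OF T_A[OF x w] i] .
  then obtain \<delta> where d: "\<delta> \<in> R x" "F x w \<delta> = alpha i" using F_R[OF x w] by (metis imageE)
  show ?thesis
  proof (cases "\<delta> \<in> Rp x")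
    case True thus ?thesis using d by blast
  next
    case False
    hence "- \<delta> \<in> Rp x" using R_cases[OF x d(1)] by blast
    moreover have "F x w (- \<delta>) = - alpha i" using d by (simp add: F_neg)
    ultimately show ?thesis by blast
  qed
qed

lemma F_cons: "F x (i # w) v = sg i (T x w) (F x w v)" by simp

lemma pos_inj_neg: assumes x: "x \<in> A" and w: "set w \<subseteq> I" and a: "\<alpha> \<in> Rp x" and g: "\<gamma> \<in> Rp x"
  and e: "F x w \<alpha> = - F x w \<gamma>" shows False
proof -
  have "F x w \<alpha> = F x w (- \<gamma>)" using e by (simp add: F_neg)
  hence "\<alpha> = - \<gamma>" using F_inj[OF x w] by (meson injD)
  thus False using Rp_neg_not[OF x g] a by simp
qed

lemma N_plus: assumes x: "x \<in> A" and w: "set w \<subseteq> I" and i: "i \<in> I"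
  and g: "\<gamma> \<in> Rp x" and e: "F x w \<gamma> = alpha i"
  shows "N x (i # w) = insert \<gamma> (N x w)" "\<gamma> \<notin> N x w"
proof -
  have t: "T x w \<in> A" using T_A[OF x w] .
  have key: "\<alpha> \<in> N x (i # w) \<longleftrightarrow> \<alpha> = \<gamma> \<or> \<alpha> \<in> N x w" if a: "\<alpha> \<in> Rp x" for \<alpha>
  proof -
    have bR: "F x w \<alpha> \<in> R (T x w)" using F_R[OF x w] Rp_R[OF a] by blast
    have nm: "F x w \<alpha> \<noteq> - alpha i"
    proof
      assume "F x w \<alpha> = - alpha i" thus False using pos_inj_neg[OF x w a g] e by simp
    qed
    have eq: "F x w \<alpha> = alpha i \<longleftrightarrow> \<alpha> = \<gamma>" using F_inj[OF x w] e by (metis injD)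
    have "\<alpha> \<in> N x (i # w) \<longleftrightarrow> sg i (T x w) (F x w \<alpha>) \<notin> Rp (rho i (T x w))"
      unfolding N_def using a by simp
    also have "\<dots> \<longleftrightarrow> \<not> ((F x w \<alpha> \<in> Rp (T x w) \<and> F x w \<alpha> \<noteq> alpha i) \<or> F x w \<alpha> = - alpha i)"
      using sg_S[OF i t bR] by simp
    also have "\<dots> \<longleftrightarrow> \<alpha> = \<gamma> \<or> \<alpha> \<in> N x w" unfolding N_def using a nm eq by auto
    finally show ?thesis .
  qed
  show "N x (i # w) = insert \<gamma> (N x w)"
  proof
    show "N x (i # w) \<subseteq> insert \<gamma> (N x w)" using key unfolding N_def by blast
    show "insert \<gamma> (N x w) \<subseteq> N x (i # w)" using key g unfolding N_def by blast
  qed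
  show "\<gamma> \<notin> N x w" unfolding N_def using e alpha_Rp[OF t i] by simp
qed

lemma N_minus: assumes x: "x \<in> A" and w: "set w \<subseteq> I" and i: "i \<in> I"
  and g: "\<gamma> \<in> Rp x" and e: "F x w \<gamma> = - alpha i"
  shows "N x (i # w) = N x w - {\<gamma>}" "\<gamma> \<in> N x w"
proof -
  have t: "T x w \<in> A" using T_A[OF x w] .
  have key: "\<alpha> \<in> N x (i # w) \<longleftrightarrow> \<alpha> \<noteq> \<gamma> \<and> \<alpha> \<in> N x w" if a: "\<alpha> \<in> Rp x" for \<alpha>
  proof -
    have bR: "F x w \<alpha> \<in> R (T x w)" using F_R[OF x w] Rp_R[OF a] by blast
    have nm: "F x w \<alpha> \<noteq> alpha i"
    proof
      assume "F x w \<alpha> = alpha i" thus False using pos_inj_neg[OF x w a g] e by simp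
    qed
    have eq: "F x w \<alpha> = - alpha i \<longleftrightarrow> \<alpha> = \<gamma>" using F_inj[OF x w] e by (metis injD)
    have "\<alpha> \<in> N x (i # w) \<longleftrightarrow> sg i (T x w) (F x w \<alpha>) \<notin> Rp (rho i (T x w))"
      unfolding N_def using a by simp
    also have "\<dots> \<longleftrightarrow> \<not> ((F x w \<alpha> \<in> Rp (T x w) \<and> F x w \<alpha> \<noteq> alpha i) \<or> F x w \<alpha> = - alpha i)"
      using sg_S[OF i t bR] by simp
    also have "\<dots> \<longleftrightarrow> \<alpha> \<noteq> \<gamma> \<and> \<alpha> \<in> N x w" unfolding N_def using a nm eq by auto
    finally show ?thesis .
  qed
  show "N x (i # w) = N x w - {\<gamma>}"
  proof
    show "N x (i # w) \<subseteq> N x w - {\<gamma>}" using key unfolding N_def by blast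
    show "N x w - {\<gamma>} \<subseteq> N x (i # w)" using key unfolding N_def by blast
  qed
  have "- alpha i \<notin> Rp (T x w)" using Rp_neg_not[OF t alpha_Rp[OF t i]] by blast
  thus "\<gamma> \<in> N x w" unfolding N_def using e g by simp
qed

lemma N_fin_card: "x \<in> A \<Longrightarrow> set w \<subseteq> I \<Longrightarrow> finite (N x w) \<and> card (N x w) \<le> length w \<and> even (card (N x w) + length w)"
proof (induction w)
  case Nil thus ?case by (simp add: N_def)
next
  case (Cons i w)
  have x: "x \<in> A" and w: "set w \<subseteq> I" and i: "i \<in> I" using Cons.prems by auto
  have IH: "finite (N x w)" "card (N x w) \<le> length w" "even (card (N x w) + length w)"
    using Cons.IH x w by auto
  from step_cases[OF x w i] show ?case
  proof
    assume "\<exists>\<gamma>\<in>Rp x. F x w \<gamma> = alpha i"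
    then obtain \<gamma> where g: "\<gamma> \<in> Rp x" "F x w \<gamma> = alpha i" by blast
    note P = N_plus[OF x w i g]
    show ?case using IH unfolding P(1) using P(2) by simp
  next
    assume "\<exists>\<gamma>\<in>Rp x. F x w \<gamma> = - alpha i"
    then obtain \<gamma> where g: "\<gamma> \<in> Rp x" "F x w \<gamma> = - alpha i" by blast
    note P = N_minus[OF x w i g]
    have c: "card (N x w - {\<gamma>}) = card (N x w) - 1" using P(2) IH(1) by simp
    have "card (N x w) \<ge> 1" using P(2) IH(1) by (metis One_nat_def Suc_leI card_gt_0_iff empty_iff)
    thus ?case using IH unfolding P(1) c by auto
  qed
qed

lemma N_finite: "x \<in> A \<Longrightarrow> set w \<subseteq> I \<Longrightarrow> finite (N x w)" using N_fin_card by blast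
lemma N_card_le: "x \<in> A \<Longrightarrow> set w \<subseteq> I \<Longrightarrow> card (N x w) \<le> length w" using N_fin_card by blast
lemma N_parity: "x \<in> A \<Longrightarrow> set w \<subseteq> I \<Longrightarrow> even (card (N x w) + length w)" using N_fin_card by blast

lemma card_plus: assumes "x \<in> A" "set w \<subseteq> I" "i \<in> I" "\<gamma> \<in> Rp x" "F x w \<gamma> = alpha i"
  shows "card (N x (i # w)) = Suc (card (N x w))"
  using N_plus[OF assms] N_finite[OF assms(1,2)] by simp

lemma card_minus: assumes "x \<in> A" "set w \<subseteq> I" "i \<in> I" "\<gamma> \<in> Rp x" "F x w \<gamma> = - alpha i"
  shows "Suc (card (N x (i # w))) = card (N x w)"
proof -
  have f: "finite (N x w)" using N_finite[OF assms(1,2)] .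
  have g: "\<gamma> \<in> N x w" using N_minus[OF assms] by blast
  have "card (N x w) > 0" using g f card_gt_0_iff by blast
  thus ?thesis using N_minus(1)[OF assms] f g by simp
qed

lemma T_snoc: "k \<in> I \<Longrightarrow> x \<in> A \<Longrightarrow> T (rho k x) (w @ [k]) = T x w"
  by (simp add: T_append rho2)
lemma F_snoc: "k \<in> I \<Longrightarrow> x \<in> A \<Longrightarrow> F (rho k x) (w @ [k]) v = F x w (sg k (rho k x) v)"
  by (simp add: F_append T_append rho2)

lemma snoc_pos_in_N: assumes x: "x \<in> A" and w: "set w \<subseteq> I" and k: "k \<in> I"
  and p: "F x w (alpha k) \<in> Rp (T x w)"
  shows "alpha k \<in> N (rho k x) (w @ [k])"
proof -
  have rx: "rho k x \<in> A" using rhoA[OF k x] .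
  have "sg k (rho k x) (alpha k) = - alpha k" using sg_alpha[OF k rx] .
  hence "F (rho k x) (w @ [k]) (alpha k) = - F x w (alpha k)" using F_snoc[OF k x] by (simp add: F_neg)
  moreover have "- F x w (alpha k) \<notin> Rp (T x w)" using Rp_neg_not[OF T_A[OF x w] p] by blast
  ultimately show ?thesis unfolding N_def using alpha_Rp[OF rx k] T_snoc[OF k x] by simp
qed

lemma snoc_neg_card: assumes x: "x \<in> A" and w: "set w \<subseteq> I" and k: "k \<in> I"
  and p: "F x w (alpha k) \<notin> Rp (T x w)"
  shows "card (N (rho k x) (w @ [k])) < card (N x w)"
proof -
  have rx: "rho k x \<in> A" using rhoA[OF k x] .
  have t: "T x w \<in> A" using T_A[OF x w] .
  have akN: "alpha k \<in> N x w" unfolding N_def using p alpha_Rp[OF x k] by simp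
  have sub: "N (rho k x) (w @ [k]) \<subseteq> sg k x ` (N x w - {alpha k})"
  proof
    fix \<alpha> assume a: "\<alpha> \<in> N (rho k x) (w @ [k])"
    have aR: "\<alpha> \<in> Rp (rho k x)" and an: "F x w (sg k (rho k x) \<alpha>) \<notin> Rp (T x w)"
      using a unfolding N_def using F_snoc[OF k x] T_snoc[OF k x] by auto
    have ne: "\<alpha> \<noteq> alpha k"
    proof
      assume "\<alpha> = alpha k"
      hence "F x w (sg k (rho k x) \<alpha>) = - F x w (alpha k)" using sg_alpha[OF k rx] by (simp add: F_neg)
      moreover have "- F x w (alpha k) \<in> Rp (T x w)"
        using negR_notRp_pos[OF t _ p] F_R[OF x w] alpha_R[OF x k] by blast
      ultimately show False using an by simp
    qed
    have bp: "sg k (rho k x) \<alpha> \<in> Rp x" using sg_pos[OF k rx aR ne] rho2[OF k x] by simp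
    have bne: "sg k (rho k x) \<alpha> \<noteq> alpha k"
    proof
      assume "sg k (rho k x) \<alpha> = alpha k"
      hence "sg k x (sg k (rho k x) \<alpha>) = - alpha k" using sg_alpha[OF k x] by simp
      hence "\<alpha> = - alpha k" using sg_invol[OF k rx] rho2[OF k x] by simp
      thus False using Rp_neg_not[OF rx alpha_Rp[OF rx k]] aR by simp
    qed
    have "sg k (rho k x) \<alpha> \<in> N x w - {alpha k}" unfolding N_def using bp an bne by simp
    moreover have "\<alpha> = sg k x (sg k (rho k x) \<alpha>)" using sg_invol[OF k rx] rho2[OF k x] by simp
    ultimately show "\<alpha> \<in> sg k x ` (N x w - {alpha k})" by blast
  qed
  have f: "finite (N x w)" using N_finite[OF x w] .
  have "card (N (rho k x) (w @ [k])) \<le> card (sg k x ` (N x w - {alpha k}))"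
    using sub f by (intro card_mono) auto
  also have "\<dots> \<le> card (N x w - {alpha k})" using f by (intro card_image_le) auto
  also have "\<dots> < card (N x w)" by (rule card_Diff1_less[OF f akN])
  finally show ?thesis .
qed

definition eqv where "eqv x w w' \<longleftrightarrow> T x w = T x w' \<and> F x w = F x w'"
definition red where "red x w \<longleftrightarrow> set w \<subseteq> I \<and> (\<forall>w'. set w' \<subseteq> I \<longrightarrow> eqv x w w' \<longrightarrow> length w \<le> length w')"

lemma eqv_refl: "eqv x w w" by (simp add: eqv_def)
lemma eqv_sym: "eqv x w w' \<Longrightarrow> eqv x w' w" by (simp add: eqv_def)
lemma eqv_trans: "eqv x w w' \<Longrightarrow> eqv x w' w'' \<Longrightarrow> eqv x w w''" by (simp add: eqv_def)
lemma eqv_app_left: "eqv (T x u) v v' \<Longrightarrow> eqv x (v @ u) (v' @ u)"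
  by (simp add: eqv_def T_append F_append)
lemma eqv_app_right: "eqv x u u' \<Longrightarrow> eqv x (v @ u) (v @ u')"
  by (simp add: eqv_def T_append F_append)
lemma eqv_N: "eqv x w w' \<Longrightarrow> N x w = N x w'" by (simp add: eqv_def N_def)

lemma eqv_jj: assumes "y \<in> A" "j \<in> I" shows "eqv y [j, j] []"
proof -
  have "T y [j,j] = y" using rho2[OF assms(2,1)] by simp
  moreover have "F y [j,j] = id"
  proof (rule ext)
    fix v show "F y [j,j] v = id v" using sg_invol[OF assms(2,1)] by simp
  qed
  ultimately show ?thesis by (simp add: eqv_def)
qed

lemma eqv_cancel: assumes x: "x \<in> A" and q: "set q \<subseteq> I" and j: "j \<in> I"
  shows "eqv x (p @ [j, j] @ q) (p @ q)"
proof -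
  have "eqv x ([j,j] @ q) ([] @ q)" by (rule eqv_app_left) (use eqv_jj[OF T_A[OF x q] j] in simp)
  hence "eqv x (p @ ([j,j] @ q)) (p @ ([] @ q))" by (rule eqv_app_right)
  thus ?thesis by simp
qed

lemma parity_eqv: assumes "x \<in> A" "set w \<subseteq> I" "set w' \<subseteq> I" "eqv x w w'"
  shows "even (length w + length w')"
proof -
  have "even (card (N x w) + length w)" "even (card (N x w') + length w')"
    using N_parity assms by auto
  moreover have "N x w = N x w'" using eqv_N[OF assms(4)] .
  ultimately show ?thesis by (auto simp: even_add)
qed

lemma red_suffix: assumes "red x (v @ u)" shows "red x u"
  unfolding red_def
proof (intro conjI allI impI)
  show "set u \<subseteq> I" using assms unfolding red_def by auto
  fix u' assume "set u' \<subseteq> I" "eqv x u u'"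
  hence "eqv x (v @ u) (v @ u')" "set (v @ u') \<subseteq> I" using assms eqv_app_right unfolding red_def by auto
  hence "length (v @ u) \<le> length (v @ u')" using assms unfolding red_def by blast
  thus "length u \<le> length u'" by simp
qed

lemma red_prefix: assumes "red x (v @ u)" shows "red (T x u) v"
  unfolding red_def
proof (intro conjI allI impI)
  show "set v \<subseteq> I" using assms unfolding red_def by auto
  fix v' assume "set v' \<subseteq> I" "eqv (T x u) v v'"
  hence "eqv x (v @ u) (v' @ u)" "set (v' @ u) \<subseteq> I" using assms eqv_app_left unfolding red_def by auto
  hence "length (v @ u) \<le> length (v' @ u)" using assms unfolding red_def by blast
  thus "length v \<le> length v'" by simp
qed

lemma red_exists: assumes "set w \<subseteq> I" shows "\<exists>w0. red x w0 \<and> eqv x w w0"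
proof -
  obtain w0 where w0: "set w0 \<subseteq> I \<and> eqv x w w0"
    and m: "\<And>w1. set w1 \<subseteq> I \<and> eqv x w w1 \<Longrightarrow> length w0 \<le> length w1"
    using ex_has_least_nat[of "\<lambda>w1. set w1 \<subseteq> I \<and> eqv x w w1" w length] assms eqv_refl by blast
  have "red x w0" unfolding red_def
  proof (intro conjI allI impI)
    show "set w0 \<subseteq> I" using w0 by blast
    fix w1 assume "set w1 \<subseteq> I" "eqv x w0 w1"
    thus "length w0 \<le> length w1" using m w0 eqv_trans by blast
  qed
  thus ?thesis using w0 by blast
qed

lemma red_eqv: assumes "red x w" "eqv x w w'" "set w' \<subseteq> I" "length w' = length w" shows "red x w'"
  using assms unfolding red_def by (metis eqv_sym eqv_trans)

lemma red_snoc_not: assumes y: "y \<in> A" and j: "j \<in> I" and r: "red y v" and nr: "\<not> red (rho j y) (v @ [j])"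
  shows "\<exists>v'. set v' \<subseteq> I \<and> Suc (length v') = length v \<and> eqv y v (v' @ [j])"
proof -
  have vI: "set v \<subseteq> I" using r unfolding red_def by blast
  have ry: "rho j y \<in> A" using rhoA[OF j y] .
  from nr obtain v'' where v'': "set v'' \<subseteq> I" "eqv (rho j y) (v @ [j]) v''" "length v'' < Suc (length v)"
    unfolding red_def using vI j by force
  have e1: "eqv y ((v @ [j]) @ [j]) (v'' @ [j])"
  proof (rule eqv_app_left)
    show "eqv (T y [j]) (v @ [j]) v''" using v''(2) by simp
  qed
  have e2: "eqv y ((v @ [j]) @ [j]) v" using eqv_cancel[OF y _ j, of "[]" v] by simp
  have e: "eqv y v (v'' @ [j])" using eqv_trans[OF eqv_sym[OF e2] e1] .
  have s: "set (v'' @ [j]) \<subseteq> I" using v''(1) j by simp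
  have "length v \<le> length (v'' @ [j])" using r e s unfolding red_def by blast
  moreover have "even (length (v @ [j]) + length v'')"
    using parity_eqv[OF ry _ v''(1) v''(2)] vI j by auto
  ultimately have "Suc (length v'') = length v" using v''(3) by simp presburger
  thus ?thesis using e v''(1) by blast
qed

end


primrec alt :: "'i \<Rightarrow> 'i \<Rightarrow> nat \<Rightarrow> 'i list" where
  "alt j k 0 = []"
| "alt j k (Suc t) = (if even t then j else k) # alt j k t"

lemma set_alt: "set (alt j k t) \<subseteq> {j, k}" by (induction t) auto
lemma length_alt[simp]: "length (alt j k t) = t" by (induction t) auto

lemma alt_Suc_snoc: "alt j k (Suc n) = alt k j n @ [j]"
  by (induction n) auto

lemma rev_alt: "rev (alt j k n) = (if even n then alt k j n else alt j k n)"
proof (induction n arbitrary: j k)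
  case 0 thus ?case by simp
next
  case (Suc n)
  have "rev (alt j k (Suc n)) = j # rev (alt k j n)" unfolding alt_Suc_snoc by simp
  also have "\<dots> = j # (if even n then alt j k n else alt k j n)" using Suc by simp
  also have "\<dots> = (if even (Suc n) then alt k j (Suc n) else alt j k (Suc n))" by (cases "even n") simp_all
  finally show ?case .
qed

lemma alt_add: "alt j k (s + t) = (if even t then alt j k s else alt k j s) @ alt j k t"
  by (induction s) auto

definition plane :: "'i \<Rightarrow> 'i \<Rightarrow> ('i \<Rightarrow> int) \<Rightarrow> bool" where
  "plane j k v \<longleftrightarrow> (\<forall>l. l \<noteq> j \<and> l \<noteq> k \<longrightarrow> v l = 0)"

lemma plane_expand: assumes "j \<noteq> k" "plane j k v"
  shows "v = (\<lambda>l. v j * alpha j l + v k * alpha k l)"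
  using assms unfolding plane_def alpha_def by (intro ext) auto

lemma alpha_plane: "plane j k (alpha j)" "plane j k (alpha k)"
  unfolding plane_def alpha_def by auto

context rs begin

abbreviation Pl where "Pl y j k \<equiv> m_ij (R y) j k"

lemma Pl_sym_aux: "(\<exists>p q. v = (\<lambda>l. p * alpha j l + q * alpha k l) \<and> 0 \<le> p \<and> 0 \<le> q) \<Longrightarrow>
   (\<exists>p q. v = (\<lambda>l. p * alpha k l + q * alpha j l) \<and> 0 \<le> p \<and> 0 \<le> q)"
proof -
  assume "\<exists>p q. v = (\<lambda>l. p * alpha j l + q * alpha k l) \<and> 0 \<le> p \<and> 0 \<le> q"
  then obtain p q where "v = (\<lambda>l. p * alpha j l + q * alpha k l)" "0 \<le> p" "0 \<le> q" by blast
  thus ?thesis by (intro exI[of _ q] exI[of _ p]) (auto simp: add.commute)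
qed

lemma Pl_sym_set: "{(\<lambda>l. p * alpha j l + q * alpha k l) | p q. 0 \<le> p \<and> 0 \<le> q} = {(\<lambda>l. p * alpha k l + q * alpha j l) | p q. 0 \<le> p \<and> 0 \<le> q}"
proof (rule set_eqI)
  fix v
  show "v \<in> {(\<lambda>l. p * alpha j l + q * alpha k l) | p q. 0 \<le> p \<and> 0 \<le> q} \<longleftrightarrow> v \<in> {(\<lambda>l. p * alpha k l + q * alpha j l) | p q. 0 \<le> p \<and> 0 \<le> q}"
    unfolding mem_Collect_eq
  proof
    assume "\<exists>p q. v = (\<lambda>l. p * alpha j l + q * alpha k l) \<and> 0 \<le> p \<and> 0 \<le> q"
    thus "\<exists>p q. v = (\<lambda>l. p * alpha k l + q * alpha j l) \<and> 0 \<le> p \<and> 0 \<le> q" by (rule Pl_sym_aux)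
  next
    assume "\<exists>p q. v = (\<lambda>l. p * alpha k l + q * alpha j l) \<and> 0 \<le> p \<and> 0 \<le> q"
    thus "\<exists>p q. v = (\<lambda>l. p * alpha j l + q * alpha k l) \<and> 0 \<le> p \<and> 0 \<le> q" by (rule Pl_sym_aux)
  qed
qed

lemma Pl_sym: "Pl y j k = Pl y k j"
  unfolding m_ij_def Pl_sym_set ..

lemma Pl_char: assumes jk: "j \<noteq> k"
  shows "v \<in> Pl y j k \<longleftrightarrow> v \<in> R y \<and> plane j k v \<and> v j \<ge> 0 \<and> v k \<ge> 0"
proof
  assume "v \<in> Pl y j k"
  then obtain p q where v: "v \<in> R y" "v = (\<lambda>l. p * alpha j l + q * alpha k l)" "p \<ge> 0" "q \<ge> 0"
    unfolding m_ij_def by blast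
  thus "v \<in> R y \<and> plane j k v \<and> v j \<ge> 0 \<and> v k \<ge> 0"
    using jk unfolding plane_def alpha_def by auto
next
  assume a: "v \<in> R y \<and> plane j k v \<and> v j \<ge> 0 \<and> v k \<ge> 0"
  hence "v = (\<lambda>l. v j * alpha j l + v k * alpha k l)" using plane_expand[OF jk] by blast
  thus "v \<in> Pl y j k" unfolding m_ij_def using a by blast
qed

lemma Pl_Rp: assumes "j \<noteq> k" "v \<in> Pl y j k" shows "v \<in> Rp y"
proof (rule Rp_I)
  show "v \<in> R y" using assms Pl_char by blast
  fix l show "0 \<le> v l" using assms Pl_char[OF assms(1)] unfolding plane_def
    by (cases "l = j \<or> l = k") auto
qed

lemma alpha_Pl: assumes "j \<noteq> k" "y \<in> A" "j \<in> I" "k \<in> I"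
  shows "alpha j \<in> Pl y j k" "alpha k \<in> Pl y j k"
  using assms alpha_R alpha_plane Pl_char by (auto simp: alpha_def)

lemma F_plane: assumes w: "set w \<subseteq> {j, k}" and p: "plane j k v" shows "plane j k (F x w v)"
  unfolding plane_def
proof (intro allI impI)
  fix l assume l: "l \<noteq> j \<and> l \<noteq> k"
  have "F x w v l = v l" by (rule F_other) (use w l in auto)
  thus "F x w v l = 0" using p l unfolding plane_def by simp
qed

lemma N_sub_Pl: assumes x: "x \<in> A" and w: "set w \<subseteq> {j,k}" and jk: "j \<noteq> k" "j \<in> I" "k \<in> I"
  shows "N x w \<subseteq> Pl x j k"
proof
  fix \<alpha> assume a: "\<alpha> \<in> N x w"
  have wI: "set w \<subseteq> I" using w jk by auto
  have ar: "\<alpha> \<in> Rp x" and an: "F x w \<alpha> \<notin> Rp (T x w)" using a unfolding N_def by auto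
  have "plane j k \<alpha>"
    unfolding plane_def
  proof (intro allI impI)
    fix l assume l: "l \<noteq> j \<and> l \<noteq> k"
    show "\<alpha> l = 0"
    proof (rule ccontr)
      assume "\<alpha> l \<noteq> 0"
      hence pos: "\<alpha> l > 0" using Rp_nn[OF ar, of l] by simp
      have e: "F x w \<alpha> l = \<alpha> l" by (rule F_other) (use w l in auto)
      have fr: "F x w \<alpha> \<in> R (T x w)" using F_R[OF x wI] Rp_R[OF ar] by (metis imageI)
      have "- F x w \<alpha> \<in> Rp (T x w)" by (rule negR_notRp_pos[OF T_A[OF x wI] fr an])
      hence "(- F x w \<alpha>) l \<ge> 0" by (rule Rp_nn)
      thus False using e pos by simp
    qed
  qed
  moreover have "\<alpha> j \<ge> 0" "\<alpha> k \<ge> 0" using Rp_nn[OF ar] by auto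
  ultimately show "\<alpha> \<in> Pl x j k" using Pl_char[OF jk(1)] Rp_R[OF ar] by simp
qed

lemma Pl_step_sub: assumes y: "y \<in> A" and jk: "j \<noteq> k" "j \<in> I" "k \<in> I" and l: "l \<in> {j, k}"
  shows "sg l y ` (Pl y j k - {alpha l}) \<subseteq> Pl (rho l y) j k - {alpha l}"
proof
  fix v assume "v \<in> sg l y ` (Pl y j k - {alpha l})"
  then obtain \<beta> where b: "\<beta> \<in> Pl y j k" "\<beta> \<noteq> alpha l" "v = sg l y \<beta>" by blast
  have lI: "l \<in> I" using l jk by auto
  have ry: "rho l y \<in> A" using rhoA[OF lI y] .
  have bp: "\<beta> \<in> Rp y" using Pl_Rp[OF jk(1) b(1)] .
  have vp: "v \<in> Rp (rho l y)" using sg_pos[OF lI y bp b(2)] b(3) by simp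
  have pl: "plane j k \<beta>" using b(1) Pl_char[OF jk(1)] by blast
  have "plane j k v" using pl l unfolding plane_def b(3) by (auto simp: sg_other)
  moreover have "v j \<ge> 0" "v k \<ge> 0" using Rp_nn[OF vp] by auto
  ultimately have "v \<in> Pl (rho l y) j k" using Pl_char[OF jk(1)] Rp_R[OF vp] by simp
  moreover have "v \<noteq> alpha l"
  proof
    assume "v = alpha l"
    hence "sg l (rho l y) v = - alpha l" using sg_alpha[OF lI ry] by simp
    hence "\<beta> = - alpha l" using sg_invol[OF lI y] b(3) by simp
    thus False using Rp_neg_not[OF y alpha_Rp[OF y lI]] bp by simp
  qed
  ultimately show "v \<in> Pl (rho l y) j k - {alpha l}" by blast
qed

lemma Pl_step: assumes y: "y \<in> A" and jk: "j \<noteq> k" "j \<in> I" "k \<in> I" and l: "l \<in> {j, k}"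
  shows "(finite (Pl (rho l y) j k) \<longleftrightarrow> finite (Pl y j k)) \<and> card (Pl (rho l y) j k) = card (Pl y j k)"
proof -
  have lI: "l \<in> I" using l jk by auto
  have ry: "rho l y \<in> A" using rhoA[OF lI y] .
  have s1: "sg l y ` (Pl y j k - {alpha l}) \<subseteq> Pl (rho l y) j k - {alpha l}" using Pl_step_sub[OF y jk l] .
  have s2: "sg l (rho l y) ` (Pl (rho l y) j k - {alpha l}) \<subseteq> Pl y j k - {alpha l}"
    using Pl_step_sub[OF ry jk l] rho2[OF lI y] by simp
  have bij: "bij_betw (sg l y) (Pl y j k - {alpha l}) (Pl (rho l y) j k - {alpha l})"
  proof (rule bij_betw_byWitness[where f'="sg l (rho l y)"])
    show "\<forall>a\<in>Pl y j k - {alpha l}. sg l (rho l y) (sg l y a) = a" using sg_invol[OF lI y] by blast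
    have "sg l y (sg l (rho l y) a) = a" for a using sg_invol[OF lI ry] rho2[OF lI y] by simp
    thus "\<forall>a\<in>Pl (rho l y) j k - {alpha l}. sg l y (sg l (rho l y) a) = a" by blast
    show "sg l y ` (Pl y j k - {alpha l}) \<subseteq> Pl (rho l y) j k - {alpha l}" by (rule s1)
    show "sg l (rho l y) ` (Pl (rho l y) j k - {alpha l}) \<subseteq> Pl y j k - {alpha l}" by (rule s2)
  qed
  have a1: "alpha l \<in> Pl y j k" and a2: "alpha l \<in> Pl (rho l y) j k"
    using alpha_Pl[OF jk(1) y jk(2,3)] alpha_Pl[OF jk(1) ry jk(2,3)] l by auto
  have fe: "finite (Pl (rho l y) j k - {alpha l}) \<longleftrightarrow> finite (Pl y j k - {alpha l})"
    using bij_betw_finite[OF bij] by simp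
  have ce: "card (Pl (rho l y) j k - {alpha l}) = card (Pl y j k - {alpha l})"
    using bij_betw_same_card[OF bij] by simp
  show ?thesis
  proof (cases "finite (Pl y j k)")
    case True
    hence f2: "finite (Pl (rho l y) j k)" using fe by simp
    have "card (Pl (rho l y) j k) = Suc (card (Pl (rho l y) j k - {alpha l}))"
      using card_Suc_Diff1[OF f2 a2] by simp
    also have "\<dots> = Suc (card (Pl y j k - {alpha l}))" using ce by simp
    also have "\<dots> = card (Pl y j k)" using card_Suc_Diff1[OF True a1] by simp
    finally show ?thesis using True f2 by simp
  next
    case False
    hence f2: "\<not> finite (Pl (rho l y) j k)" using fe by simp
    thus ?thesis using False by simp
  qed
qed

lemma Pl_word: assumes y: "y \<in> A" and jk: "j \<noteq> k" "j \<in> I" "k \<in> I"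
  shows "set w \<subseteq> {j, k} \<Longrightarrow> (finite (Pl (T y w) j k) \<longleftrightarrow> finite (Pl y j k)) \<and> card (Pl (T y w) j k) = card (Pl y j k)"
proof (induction w)
  case Nil thus ?case by simp
next
  case (Cons l w)
  have t: "T y w \<in> A" using T_A[OF y] Cons.prems jk by auto
  have "l \<in> {j,k}" using Cons.prems by simp
  from Pl_step[OF t jk this] Cons show ?case by simp
qed

lemma plane_sum: assumes jk: "j \<noteq> k" "j \<in> I" "k \<in> I" and p: "plane j k v"
  shows "(\<Sum>i\<in>I. g i * v i) = g j * v j + g k * v k"
proof -
  have "(\<Sum>i\<in>I. g i * v i) = (\<Sum>i\<in>{j,k}. g i * v i)"
    by (rule sum.mono_neutral_right) (use finI jk p in \<open>auto simp: plane_def\<close>)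
  thus ?thesis using jk by simp
qed

end


context rs begin

lemma N_nil: "N x [] = {}" by (simp add: N_def)

lemma alt_I: "j \<in> I \<Longrightarrow> k \<in> I \<Longrightarrow> set (alt j k t) \<subseteq> I" by (rule subset_trans[OF set_alt]) simp

lemma CL: assumes x: "x \<in> A" and jk: "j \<noteq> k" "j \<in> I" "k \<in> I"
  shows "infinite (Pl x j k) \<or> t \<le> card (Pl x j k) \<Longrightarrow> card (N x (alt j k t)) = t"
proof (induction t)
  case 0 thus ?case by (simp add: N_nil)
next
  case (Suc t)
  have H: "infinite (Pl x j k) \<or> Suc t \<le> card (Pl x j k)" using Suc.prems .
  have IH: "card (N x (alt j k t)) = t" using Suc.IH H by auto
  have wI: "set (alt j k t) \<subseteq> I" using alt_I[OF jk(2,3)] .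
  define l where "l = (if even t then j else k)"
  have lI: "l \<in> I" using jk unfolding l_def by auto
  have altS: "alt j k (Suc t) = l # alt j k t" unfolding l_def by simp
  from step_cases[OF x wI lI] show ?case
  proof
    assume "\<exists>\<gamma>\<in>Rp x. F x (alt j k t) \<gamma> = alpha l"
    then obtain \<gamma> where g: "\<gamma> \<in> Rp x" "F x (alt j k t) \<gamma> = alpha l" by blast
    show ?case unfolding altS using card_plus[OF x wI lI g] IH by simp
  next
    assume "\<exists>\<gamma>\<in>Rp x. F x (alt j k t) \<gamma> = - alpha l"
    then obtain \<gamma> where g: "\<gamma> \<in> Rp x" "F x (alt j k t) \<gamma> = - alpha l" by blast
    have False
    proof (cases t)
      case 0
      hence "\<gamma> = - alpha l" using g by simp
      thus False using Rp_neg_not[OF x alpha_Rp[OF x lI]] g(1) by simp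
    next
      case (Suc t')
      define l' where "l' = (if even t' then j else k)"
      have l'I: "l' \<in> I" using jk unfolding l'_def by auto
      have altt: "alt j k t = l' # alt j k t'" unfolding l'_def Suc by simp
      have ll': "l \<noteq> l'" unfolding l_def l'_def Suc using jk by auto
      have lset: "l \<in> {j,k}" "l' \<in> {j,k}" unfolding l_def l'_def by auto
      have wI': "set (alt j k t') \<subseteq> I" using alt_I[OF jk(2,3)] .
      have le': "card (N x (alt j k t')) \<le> t'" using N_card_le[OF x wI'] by simp
      have nminus: "\<not> (\<exists>\<gamma>\<in>Rp x. F x (alt j k t') \<gamma> = - alpha l')"
      proof
        assume "\<exists>\<gamma>\<in>Rp x. F x (alt j k t') \<gamma> = - alpha l'"
        then obtain \<gamma>'' where gg: "\<gamma>'' \<in> Rp x" "F x (alt j k t') \<gamma>'' = - alpha l'" by blast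
        have "Suc (card (N x (l' # alt j k t'))) = card (N x (alt j k t'))"
          by (rule card_minus[OF x wI' l'I gg])
        hence "Suc (card (N x (alt j k t))) = card (N x (alt j k t'))" unfolding altt .
        thus False using IH le' Suc by simp
      qed
      obtain \<gamma>' where g': "\<gamma>' \<in> Rp x" "F x (alt j k t') \<gamma>' = alpha l'"
        using step_cases[OF x wI' l'I] nminus by blast
      have t'A: "T x (alt j k t') \<in> A" using T_A[OF x wI'] .
      have g'2: "F x (alt j k t) \<gamma>' = - alpha l'" unfolding altt using g'(2) sg_alpha[OF l'I t'A] by simp
      define c where "c = T x (alt j k t)"
      have cA: "c \<in> A" unfolding c_def using T_A[OF x wI] .
      define wr where "wr = rev (alt j k t)"
      have wrI: "set wr \<subseteq> I" unfolding wr_def using wI by simp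
      have Tc: "T c wr = x" unfolding c_def wr_def using T_rev[OF x wI] .
      have psi: "F c wr (F x (alt j k t) v) = v" for v unfolding c_def wr_def using F_rev_ap[OF x wI] .
      have p1: "F c wr (alpha l) = - \<gamma>"
      proof -
        have "F c wr (- alpha l) = \<gamma>" using psi[of \<gamma>] g(2) by simp
        hence "- F c wr (alpha l) = \<gamma>" by (simp add: F_neg)
        thus ?thesis by (metis neg_neg)
      qed
      have p2: "F c wr (alpha l') = - \<gamma>'"
      proof -
        have "F c wr (- alpha l') = \<gamma>'" using psi[of \<gamma>'] g'2 by simp
        hence "- F c wr (alpha l') = \<gamma>'" by (simp add: F_neg)
        thus ?thesis by (metis neg_neg)
      qed
      have np: "F c wr (alpha l0) m \<le> 0" if "l0 \<in> {j,k}" for l0 m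
      proof -
        have "l0 = l \<or> l0 = l'" using that lset ll' by auto
        thus ?thesis using p1 p2 Rp_nn[OF g(1), of m] Rp_nn[OF g'(1), of m] by auto
      qed
      have sub: "Pl c j k \<subseteq> N c wr"
      proof
        fix \<delta> assume d: "\<delta> \<in> Pl c j k"
        have dc: "\<delta> \<in> R c" "plane j k \<delta>" "\<delta> j \<ge> 0" "\<delta> k \<ge> 0" using d Pl_char[OF jk(1)] by auto
        have de: "\<delta> = (\<lambda>l. \<delta> j * alpha j l + \<delta> k * alpha k l)" using plane_expand[OF jk(1) dc(2)] .
        have Fd: "F c wr \<delta> = (\<lambda>m. \<delta> j * F c wr (alpha j) m + \<delta> k * F c wr (alpha k) m)"
          by (subst de) (rule F_lin2)
        have le0: "F c wr \<delta> m \<le> 0" for m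
        proof -
          have "\<delta> j * F c wr (alpha j) m \<le> 0" using dc(3) np[of j m] by (simp add: mult_nonneg_nonpos)
          moreover have "\<delta> k * F c wr (alpha k) m \<le> 0" using dc(4) np[of k m] by (simp add: mult_nonneg_nonpos)
          ultimately show ?thesis using Fd by simp
        qed
        have inR: "F c wr \<delta> \<in> R x" using F_R[OF cA wrI] dc(1) Tc by blast
        have "F c wr \<delta> \<notin> Rp x"
        proof
          assume "F c wr \<delta> \<in> Rp x"
          hence "0 \<le> F c wr \<delta> m" for m by (rule Rp_nn)
          thus False using not_both[OF x inR] le0 by blast
        qed
        thus "\<delta> \<in> N c wr" unfolding N_def using Pl_Rp[OF jk(1) d] Tc by simp
      qed
      have fN: "finite (N c wr)" using N_finite[OF cA wrI] .
      have cN: "card (N c wr) \<le> t" using N_card_le[OF cA wrI] unfolding wr_def by simp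
      have fP: "finite (Pl c j k)" using finite_subset[OF sub fN] .
      have cP: "card (Pl c j k) \<le> t" using card_mono[OF fN sub] cN by simp
      have pw: "(finite (Pl c j k) \<longleftrightarrow> finite (Pl x j k)) \<and> card (Pl c j k) = card (Pl x j k)"
        unfolding c_def using Pl_word[OF x jk set_alt] .
      show False using H fP cP pw by auto
    qed
    thus ?case ..
  qed
qed

end


context rs begin

lemma T_alt_even: "T x (alt j k (2 * n)) = ((rho k \<circ> rho j) ^^ n) x"
proof (induction n)
  case 0 thus ?case by simp
next
  case (Suc n)
  have e2: "2 * Suc n = Suc (Suc (2 * n))" by simp
  have "alt j k (2 * Suc n) = k # j # alt j k (2 * n)"
    unfolding e2 by simp
  thus ?case using Suc by simp
qed

definition dt :: "'i \<Rightarrow> 'i \<Rightarrow> (('i \<Rightarrow> int) \<Rightarrow> ('i \<Rightarrow> int)) \<Rightarrow> int" where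
  "dt j k f = f (alpha j) j * f (alpha k) k - f (alpha j) k * f (alpha k) j"

lemma dt_F: assumes x: "x \<in> A" and jk: "j \<noteq> k" "j \<in> I" "k \<in> I"
  shows "set w \<subseteq> {j,k} \<Longrightarrow> dt j k (F x w) = (-1) ^ length w"
proof (induction w)
  case Nil thus ?case using jk by (simp add: dt_def alpha_def)
next
  case (Cons l w)
  have w: "set w \<subseteq> {j,k}" and l: "l \<in> {j,k}" using Cons.prems by auto
  have wI: "set w \<subseteq> I" using w jk by auto
  define y where "y = T x w"
  have y: "y \<in> A" unfolding y_def using T_A[OF x wI] .
  define a where "a = F x w (alpha j)"
  define b where "b = F x w (alpha k)"
  have pa: "plane j k a" unfolding a_def using F_plane[OF w alpha_plane(1)] .
  have pb: "plane j k b" unfolding b_def using F_plane[OF w alpha_plane(2)] .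
  have IH: "a j * b k - a k * b j = (-1) ^ length w" using Cons.IH w unfolding dt_def a_def b_def by simp
  have e: "dt j k (F x (l # w)) = dt j k (\<lambda>v. sg l y (F x w v))" unfolding y_def by (simp add: comp_def)
  show ?case
  proof (cases "l = j")
    case True
    have sa: "sg j y a j = - a j - C y j k * a k"
      using plane_sum[OF jk pa, of "C y j"] cii[OF y jk(2)] by (simp add: sg_i)
    have sb: "sg j y b j = - b j - C y j k * b k"
      using plane_sum[OF jk pb, of "C y j"] cii[OF y jk(2)] by (simp add: sg_i)
    have "dt j k (F x (l # w)) = sg j y a j * sg j y b k - sg j y a k * sg j y b j"
      by (simp add: dt_def a_def b_def True y_def)
    also have "\<dots> = - (a j * b k - a k * b j)" unfolding sa sb using jk by (simp add: sg_other algebra_simps)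
    finally show ?thesis using IH by (simp add: comp_def)
  next
    case False
    hence lk: "l = k" using l by simp
    have sa: "sg k y a k = - a k - C y k j * a j"
      using plane_sum[OF jk pa, of "C y k"] cii[OF y jk(3)] by (simp add: sg_i)
    have sb: "sg k y b k = - b k - C y k j * b j"
      using plane_sum[OF jk pb, of "C y k"] cii[OF y jk(3)] by (simp add: sg_i)
    have "dt j k (F x (l # w)) = sg k y a j * sg k y b k - sg k y a k * sg k y b j"
      by (simp add: dt_def a_def b_def lk y_def)
    also have "\<dots> = - (a j * b k - a k * b j)" unfolding sa sb using jk by (simp add: sg_other algebra_simps)
    finally show ?thesis using IH by (simp add: comp_def)
  qed
qed

end

locale rs2 = rs +
  fixes x j k
  assumes x: "x \<in> A" and jk: "j \<noteq> k" "j \<in> I" "k \<in> I" and fin: "finite (Pl x j k)"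
begin

abbreviation m where "m \<equiv> card (Pl x j k)"

lemma wI: "set (alt j k t) \<subseteq> I" using alt_I[OF jk(2,3)] .
lemma wI': "set (alt k j t) \<subseteq> I" using alt_I[OF jk(3,2)] .

lemma Npos: "N x (alt j k m) = Pl x j k"
proof -
  have s: "N x (alt j k m) \<subseteq> Pl x j k" using N_sub_Pl[OF x set_alt jk] .
  have "card (N x (alt j k m)) = m" using CL[OF x jk] by simp
  thus ?thesis using card_subset_eq[OF fin s] by simp
qed

lemma Omega_T: "T x (alt j k (2 * m)) = x"
proof -
  have f2: "finite (m_ij (R x) k j)" using fin Pl_sym[of x j k] by simp
  have "((rho k \<circ> rho j) ^^ card (m_ij (R x) k j)) x = x" using R4[OF x jk(3,2) _ f2] jk(1) by simp
  thus ?thesis using T_alt_even Pl_sym[of x j k] by simp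
qed

definition A2 where "A2 = (if even m then alt j k m else alt k j m)"
definition y where "y = T x (alt j k m)"

lemma split: "alt j k (2 * m) = A2 @ alt j k m"
  unfolding A2_def using alt_add[of j k m m] by (simp add: mult_2)

lemma yA: "y \<in> A" unfolding y_def using T_A[OF x wI] .
lemma A2I: "set A2 \<subseteq> I" unfolding A2_def using wI wI' by simp
lemma A2jk: "set A2 \<subseteq> {j,k}" unfolding A2_def using set_alt[of j k m] set_alt[of k j m] by auto

lemma Pl_y: "finite (Pl y j k)" "card (Pl y j k) = m"
  using Pl_word[OF x jk set_alt, of m] fin unfolding y_def by auto

lemma T_A2: "T y A2 = x"
  using Omega_T unfolding split T_append y_def .

lemma N_A2: "N y A2 = Pl y j k"
proof (cases "even m")
  case True
  interpret r: rs2 I A rho C R y j k using yA jk Pl_y by unfold_locales auto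
  show ?thesis using r.Npos Pl_y True unfolding A2_def by simp
next
  case False
  interpret r: rs2 I A rho C R y k j using yA jk Pl_y Pl_sym[of y j k] by unfold_locales auto
  show ?thesis using r.Npos Pl_y False Pl_sym[of y j k] unfolding A2_def by simp
qed

lemma Omega_app: "F x (alt j k (2 * m)) v = F y A2 (F x (alt j k m) v)"
  unfolding split F_append y_def by simp

lemma Omega_pos: assumes d: "\<delta> \<in> Rp x" shows "F x (alt j k (2 * m)) \<delta> \<in> Rp x"
proof (cases "\<delta> \<in> Pl x j k")
  case True
  have "\<delta> \<in> N x (alt j k m)" using True Npos by simp
  hence n1: "F x (alt j k m) \<delta> \<notin> Rp y" unfolding N_def y_def by simp
  have r1: "F x (alt j k m) \<delta> \<in> R y" using F_R[OF x wI] Rp_R[OF d] unfolding y_def by blast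
  have p1: "- F x (alt j k m) \<delta> \<in> Rp y" using negR_notRp_pos[OF yA r1 n1] .
  have pl: "plane j k (- F x (alt j k m) \<delta>)"
  proof -
    have "plane j k \<delta>" using True Pl_char[OF jk(1)] by blast
    hence "plane j k (F x (alt j k m) \<delta>)" using F_plane[OF set_alt] by blast
    thus ?thesis unfolding plane_def by simp
  qed
  have "- F x (alt j k m) \<delta> \<in> Pl y j k"
    using Pl_char[OF jk(1)] p1 pl Rp_R[OF p1] Rp_nn[OF p1] by blast
  hence "- F x (alt j k m) \<delta> \<in> N y A2" using N_A2 by simp
  hence n2: "F y A2 (- F x (alt j k m) \<delta>) \<notin> Rp x" unfolding N_def T_A2 by simp
  have "F y A2 (- F x (alt j k m) \<delta>) \<in> F y A2 ` R y" using Rp_R[OF p1] by (rule imageI)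
  hence r2: "F y A2 (- F x (alt j k m) \<delta>) \<in> R x" using F_R[OF yA A2I] T_A2 by simp
  have "- F y A2 (- F x (alt j k m) \<delta>) \<in> Rp x" using negR_notRp_pos[OF x r2 n2] .
  thus ?thesis unfolding Omega_app by (simp add: F_neg)
next
  case False
  have "\<not> plane j k \<delta>"
  proof
    assume "plane j k \<delta>"
    hence "\<delta> \<in> Pl x j k" using Pl_char[OF jk(1)] Rp_R[OF d] Rp_nn[OF d] by blast
    thus False using False by blast
  qed
  then obtain l where l: "l \<noteq> j" "l \<noteq> k" "\<delta> l \<noteq> 0" unfolding plane_def by blast
  have pos: "\<delta> l > 0" using l(3) Rp_nn[OF d, of l] by simp
  have e: "F x (alt j k (2 * m)) \<delta> l = \<delta> l" by (rule F_other) (use set_alt[of j k] l in blast)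
  have "F x (alt j k (2 * m)) \<delta> \<in> F x (alt j k (2 * m)) ` R x" using Rp_R[OF d] by (rule imageI)
  hence r: "F x (alt j k (2 * m)) \<delta> \<in> R x" using F_R[OF x wI] Omega_T by simp
  show ?thesis
  proof (rule ccontr)
    assume "F x (alt j k (2 * m)) \<delta> \<notin> Rp x"
    hence "- F x (alt j k (2 * m)) \<delta> \<in> Rp x" using negR_notRp_pos[OF x r] by blast
    hence "(- F x (alt j k (2 * m)) \<delta>) l \<ge> 0" by (rule Rp_nn)
    thus False using e pos by simp
  qed
qed

end


lemma coef01: fixes p q a b :: int
  assumes "p \<ge> 0" "q \<ge> 0" "a \<ge> 1" "b \<ge> 1" "p * a + q * b = 1"
  shows "(p = 1 \<and> q = 0) \<or> (p = 0 \<and> q = 1)"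
proof -
  have "0 \<le> p * (a - 1)" using assms by simp
  hence h1: "p \<le> p * a" by (simp add: right_diff_distrib)
  have "0 \<le> q * (b - 1)" using assms by simp
  hence h2: "q \<le> q * b" by (simp add: right_diff_distrib)
  have "p + q \<le> 1" using h1 h2 assms(5) by linarith
  moreover have "p + q \<noteq> 0"
  proof
    assume "p + q = 0" hence "p = 0" "q = 0" using assms by auto
    thus False using assms(5) by simp
  qed
  ultimately show ?thesis using assms(1,2) by linarith
qed

context rs2 begin

abbreviation Om where "Om \<equiv> F x (alt j k (2 * m))"

lemma Om_maps: assumes d: "\<delta> \<in> Pl x j k" shows "Om \<delta> \<in> Pl x j k"
proof -
  have p: "Om \<delta> \<in> Rp x" using Omega_pos[OF Pl_Rp[OF jk(1) d]] .
  have "plane j k \<delta>" using d Pl_char[OF jk(1)] by blast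
  hence pl: "plane j k (Om \<delta>)" using F_plane[OF set_alt] by blast
  have "Om \<delta> j \<ge> 0" "Om \<delta> k \<ge> 0" using Rp_nn[OF p] by auto
  thus ?thesis using Pl_char[OF jk(1)] Rp_R[OF p] pl by simp
qed

lemma Om_surj: "Om ` Pl x j k = Pl x j k"
proof (rule endo_inj_surj[OF fin])
  show "Om ` Pl x j k \<subseteq> Pl x j k" using Om_maps by blast
  show "inj_on Om (Pl x j k)" using F_inj[OF x wI] by (simp add: inj_on_def inj_def)
qed

lemma sumpos: assumes v: "v \<in> Pl x j k" shows "v j + v k \<ge> 1"
proof (rule ccontr)
  assume n: "\<not> v j + v k \<ge> 1"
  have c: "v \<in> R x" "plane j k v" "v j \<ge> 0" "v k \<ge> 0" using v Pl_char[OF jk(1)] by auto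
  hence z: "v j = 0" "v k = 0" using n by auto
  have "v = (\<lambda>l. v j * alpha j l + v k * alpha k l)" using plane_expand[OF jk(1) c(2)] .
  hence "v = (\<lambda>l. 0)" using z by simp
  thus False using zero_notR[OF x] c(1) by simp
qed

lemma hit: assumes e: "e \<in> Pl x j k" "e j + e k = 1" and d: "\<delta> \<in> Pl x j k" "Om \<delta> = e"
  shows "e = Om (alpha j) \<or> e = Om (alpha k)"
proof -
  have c: "plane j k \<delta>" "\<delta> j \<ge> 0" "\<delta> k \<ge> 0" using d(1) Pl_char[OF jk(1)] by auto
  have de: "\<delta> = (\<lambda>l. \<delta> j * alpha j l + \<delta> k * alpha k l)" using plane_expand[OF jk(1) c(1)] .
  have Od: "Om \<delta> = (\<lambda>l. \<delta> j * Om (alpha j) l + \<delta> k * Om (alpha k) l)"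
    by (subst de) (rule F_lin2)
  have aP: "Om (alpha j) \<in> Pl x j k" "Om (alpha k) \<in> Pl x j k"
    using Om_maps alpha_Pl[OF jk(1) x jk(2,3)] by auto
  have sA: "Om (alpha j) j + Om (alpha j) k \<ge> 1" and sB: "Om (alpha k) j + Om (alpha k) k \<ge> 1"
    using sumpos aP by auto
  have "\<delta> j * (Om (alpha j) j + Om (alpha j) k) + \<delta> k * (Om (alpha k) j + Om (alpha k) k) = 1"
    using e(2) d(2) Od by (simp add: fun_eq_iff algebra_simps)
  from coef01[OF c(2,3) sA sB this]
  show ?thesis
  proof
    assume "\<delta> j = 1 \<and> \<delta> k = 0"
    hence "Om \<delta> = Om (alpha j)" using Od by simp
    thus ?thesis using d(2) by simp
  next
    assume "\<delta> j = 0 \<and> \<delta> k = 1"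
    hence "Om \<delta> = Om (alpha k)" using Od by simp
    thus ?thesis using d(2) by simp
  qed
qed

lemma Om_fix: "Om (alpha j) = alpha j \<and> Om (alpha k) = alpha k"
proof -
  have aj: "alpha j \<in> Pl x j k" and ak: "alpha k \<in> Pl x j k" using alpha_Pl[OF jk(1) x jk(2,3)] by auto
  obtain d1 where d1: "d1 \<in> Pl x j k" "Om d1 = alpha j" using Om_surj aj by (metis imageE)
  obtain d2 where d2: "d2 \<in> Pl x j k" "Om d2 = alpha k" using Om_surj ak by (metis imageE)
  have h1: "alpha j = Om (alpha j) \<or> alpha j = Om (alpha k)"
    by (rule hit[OF aj _ d1]) (use jk in \<open>simp add: alpha_def\<close>)
  have h2: "alpha k = Om (alpha j) \<or> alpha k = Om (alpha k)"
    by (rule hit[OF ak _ d2]) (use jk in \<open>simp add: alpha_def\<close>)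
  have ne: "alpha j \<noteq> alpha k" using jk by (metis alpha_def zero_neq_one)
  have dt1: "dt j k Om = 1" using dt_F[OF x jk set_alt] by simp
  show ?thesis
  proof (cases "Om (alpha j) = alpha j")
    case True
    thus ?thesis using h2 ne by auto
  next
    case False
    hence B: "Om (alpha k) = alpha j" using h1 by simp
    hence A: "Om (alpha j) = alpha k" using h2 ne by auto
    have "dt j k Om = - 1" unfolding dt_def A B using jk by (simp add: alpha_def)
    thus ?thesis using dt1 by simp
  qed
qed

lemma mm: "card (Pl x k j) = m" using Pl_sym[of x j k] by simp

lemma Om_rev: "F x (alt k j (2 * m)) (Om v) = v"
proof -
  have "F (T x (alt j k (2 * m))) (rev (alt j k (2 * m))) (Om v) = v" by (rule F_rev_ap[OF x wI])
  thus ?thesis using Omega_T rev_alt[of j k "2 * m"] by simp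
qed

lemma Om_alpha: assumes l: "l \<in> I" shows "Om (alpha l) = alpha l"
proof (cases "l = j \<or> l = k")
  case True thus ?thesis using Om_fix by auto
next
  case False
  interpret r: rs2 I A rho C R x k j using x jk fin Pl_sym[of x j k] by unfold_locales auto
  have rfix: "F x (alt k j (2 * m)) (alpha k) = alpha k" "F x (alt k j (2 * m)) (alpha j) = alpha j"
    using r.Om_fix mm by auto
  have rpos: "F x (alt k j (2 * m)) \<delta> \<in> Rp x" if "\<delta> \<in> Rp x" for \<delta> using r.Omega_pos[OF that] mm by simp
  have dec: "\<exists>p q. p \<ge> 0 \<and> q \<ge> 0 \<and> G (alpha l) = (\<lambda>k'. alpha l k' + (p * alpha j k' + q * alpha k k'))"
    if G: "G = F x w" "set w \<subseteq> {j,k}" "G (alpha l) \<in> Rp x" for G w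
  proof -
    define v where "v = (\<lambda>k'. G (alpha l) k' - alpha l k')"
    have pv: "plane j k v" unfolding plane_def v_def
    proof (intro allI impI)
      fix k' assume k': "k' \<noteq> j \<and> k' \<noteq> k"
      have "F x w (alpha l) k' = alpha l k'" by (rule F_other) (use G(2) k' in auto)
      thus "G (alpha l) k' - alpha l k' = 0" using G(1) by simp
    qed
    have vj: "v j \<ge> 0" "v k \<ge> 0" unfolding v_def using Rp_nn[OF G(3)] False by (auto simp: alpha_def)
    have h: "v = (\<lambda>k'. v j * alpha j k' + v k * alpha k k')" using plane_expand[OF jk(1) pv] .
    have "G (alpha l) = (\<lambda>k'. alpha l k' + (v j * alpha j k' + v k * alpha k k'))"
    proof (rule ext)
      fix k'
      have "v k' = v j * alpha j k' + v k * alpha k k'" using fun_cong[OF h, of k'] by simp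
      moreover have "v k' = G (alpha l) k' - alpha l k'" unfolding v_def by simp
      ultimately show "G (alpha l) k' = alpha l k' + (v j * alpha j k' + v k * alpha k k')" by linarith
    qed
    thus ?thesis using vj by blast
  qed
  obtain p q where pq: "p \<ge> 0" "q \<ge> 0" "Om (alpha l) = (\<lambda>k'. alpha l k' + (p * alpha j k' + q * alpha k k'))"
    using dec[OF refl set_alt Omega_pos[OF alpha_Rp[OF x l]]] by blast
  obtain p' q' where pq': "p' \<ge> 0" "q' \<ge> 0" "F x (alt k j (2 * m)) (alpha l) = (\<lambda>k'. alpha l k' + (p' * alpha j k' + q' * alpha k k'))"
  proof -
    have s: "set (alt k j (2 * m)) \<subseteq> {j,k}" using set_alt[of k j] by blast
    show ?thesis using dec[OF refl s rpos[OF alpha_Rp[OF x l]]] that by blast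
  qed
  have "alpha l = F x (alt k j (2 * m)) (Om (alpha l))" using Om_rev by simp
  also have "Om (alpha l) = addv (alpha l) (\<lambda>k'. p * alpha j k' + q * alpha k k')"
    using pq(3) by (simp add: addv_def)
  also have "F x (alt k j (2 * m)) (addv (alpha l) (\<lambda>k'. p * alpha j k' + q * alpha k k'))
     = addv (F x (alt k j (2 * m)) (alpha l)) (\<lambda>k'. p * alpha j k' + q * alpha k k')"
    by (simp only: F_add F_lin2 rfix)
  finally have eq: "alpha l = addv (F x (alt k j (2 * m)) (alpha l)) (\<lambda>k'. p * alpha j k' + q * alpha k k')" .
  have "alpha l j = 0" "alpha l k = 0" using False by (auto simp: alpha_def)
  moreover have "eq1": "alpha l j = F x (alt k j (2 * m)) (alpha l) j + (p * alpha j j + q * alpha k j)"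
    using fun_cong[OF eq, of j] unfolding addv_def .
  moreover have "eq2": "alpha l k = F x (alt k j (2 * m)) (alpha l) k + (p * alpha j k + q * alpha k k)"
    using fun_cong[OF eq, of k] unfolding addv_def .
  moreover have "F x (alt k j (2 * m)) (alpha l) j = alpha l j + (p' * alpha j j + q' * alpha k j)"
    "F x (alt k j (2 * m)) (alpha l) k = alpha l k + (p' * alpha j k + q' * alpha k k)"
    using pq'(3) by simp_all
  ultimately have "p' + p = 0" "q' + q = 0" using jk(1) by (simp_all add: alpha_def)
  hence "p = 0" "q = 0" using pq pq' by auto
  thus ?thesis using pq(3) by simp
qed

lemma Om_id: "Om = id"
proof -
  have "Om = F x []" by (rule F_det) (use wI Om_alpha in auto)
  thus ?thesis by simp
qed

lemma coxeter: "eqv x (alt j k m) (alt k j m)"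
proof -
  have rA2: "rev A2 = alt k j m" unfolding A2_def using rev_alt[of j k m] rev_alt[of k j m] by auto
  have t: "T x (alt k j m) = y" using T_rev[OF yA A2I] T_A2 rA2 by simp
  have f: "F x (alt k j m) = F x (alt j k m)"
  proof (rule ext)
    fix v
    have "F x (alt k j m) v = F (T y A2) (rev A2) (F y A2 (F x (alt j k m) v))"
      using Om_id Omega_app[of v] T_A2 rA2 by simp
    also have "\<dots> = F x (alt j k m) v" by (rule F_rev_ap[OF yA A2I])
    finally show "F x (alt k j m) v = F x (alt j k m) v" .
  qed
  show ?thesis unfolding eqv_def using t f y_def by simp
qed

end



definition nodup2 :: "'i list \<Rightarrow> bool" where
  "nodup2 u \<longleftrightarrow> (\<forall>p q l. u \<noteq> p @ [l, l] @ q)"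

lemma alt_head: "alt j k (Suc n) = (if even n then j else k) # alt j k n" by simp

lemma alt_char: assumes jk: "j \<noteq> k"
  shows "set u \<subseteq> {j,k} \<Longrightarrow> nodup2 u \<Longrightarrow> (u = [] \<or> last u = j) \<Longrightarrow> u = alt j k (length u)"
proof (induction u)
  case Nil thus ?case by simp
next
  case (Cons l u')
  have s: "set u' \<subseteq> {j,k}" using Cons.prems by simp
  have nd: "nodup2 u'" using Cons.prems(2) unfolding nodup2_def by (metis append_Cons)
  show ?case
  proof (cases "u' = []")
    case True
    hence "l = j" using Cons.prems(3) by simp
    thus ?thesis using True by simp
  next
    case False
    have "last u' = j" using Cons.prems(3) False by simp
    hence u': "u' = alt j k (length u')" using Cons.IH s nd by blast
    obtain n where n: "length u' = Suc n" using False by (cases u') auto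
    have hu: "u' = (if even n then j else k) # alt j k n" using u' n by simp
    have "l \<noteq> (if even n then j else k)"
    proof
      assume e: "l = (if even n then j else k)"
      have "l # u' = [] @ [l, l] @ alt j k n" using hu e by simp
      thus False using Cons.prems(2) unfolding nodup2_def by blast
    qed
    moreover have "l \<in> {j,k}" using Cons.prems(1) by simp
    ultimately have "l = (if even (Suc n) then j else k)" using jk by auto
    hence "l # u' = alt j k (Suc (Suc n))" using hu by simp
    thus ?thesis using n by simp
  qed
qed

context rs begin

lemma red_nodup2: assumes x: "x \<in> A" and r: "red x u" shows "nodup2 u"
  unfolding nodup2_def
proof (intro allI notI)
  fix p q l assume u: "u = p @ [l, l] @ q"
  have uI: "set u \<subseteq> I" using r unfolding red_def by blast
  have e: "eqv x u (p @ q)" unfolding u by (rule eqv_cancel[OF x]) (use uI u in auto)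
  have "set (p @ q) \<subseteq> I" using uI u by auto
  hence "length u \<le> length (p @ q)" using r e unfolding red_def by blast
  thus False using u by simp
qed

lemma red_last: assumes x: "x \<in> A" and k: "k \<in> I" and r: "red (rho k x) (u @ [k])"
  shows "u = [] \<or> last u \<noteq> k"
proof (rule ccontr)
  assume "\<not> ?thesis"
  hence "u \<noteq> []" "last u = k" by auto
  then obtain u'' where u: "u = u'' @ [k]" by (metis append_butlast_last_id)
  have uI: "set (u @ [k]) \<subseteq> I" using r unfolding red_def by blast
  have e: "eqv (rho k x) (u'' @ [k, k] @ []) (u'' @ [])" by (rule eqv_cancel[OF rhoA[OF k x] _ k]) simp
  have "set (u'' @ []) \<subseteq> I" using uI u by auto
  moreover have "eqv (rho k x) (u @ [k]) (u'' @ [])" using e u by simp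
  ultimately have "length (u @ [k]) \<le> length (u'' @ [])" using r unfolding red_def by blast
  thus False using u by simp
qed

lemma Dprime: assumes x: "x \<in> A" and jk: "j \<noteq> k" "j \<in> I" "k \<in> I" and us: "set u \<subseteq> {j,k}"
  and r1: "red x u" and r2: "red (rho k x) (u @ [k])"
  shows "F x u (alpha k) \<in> Pl (T x u) j k"
proof -
  have uI: "set u \<subseteq> I" using r1 unfolding red_def by blast
  have rx: "rho k x \<in> A" using rhoA[OF jk(3) x] .
  have lst: "u = [] \<or> last u = j"
  proof -
    have a: "u = [] \<or> last u \<noteq> k" using red_last[OF x jk(3) r2] .
    show ?thesis
    proof (cases "u = []")
      case False
      hence "last u \<in> set u" by simp
      hence "last u \<in> {j,k}" using us by blast
      thus ?thesis using a False by blast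
    qed simp
  qed
  define r where "r = length u"
  have ua: "u = alt j k r" unfolding r_def using alt_char[OF jk(1) us red_nodup2[OF x r1] lst] .
  have small: "infinite (Pl x j k) \<or> r < card (Pl x j k)"
  proof (rule ccontr)
    assume "\<not> ?thesis"
    hence fin: "finite (Pl x j k)" and ge: "card (Pl x j k) \<le> r" by auto
    interpret rr: rs2 I A rho C R x j k using x jk fin by unfold_locales auto
    define mm where "mm = card (Pl x j k)"
    have m1: "mm \<ge> 1"
    proof -
      have "alpha j \<in> Pl x j k" using alpha_Pl[OF jk(1) x jk(2,3)] by blast
      hence "Pl x j k \<noteq> {}" by blast
      hence "card (Pl x j k) > 0" using fin card_gt_0_iff by blast
      thus ?thesis unfolding mm_def by simp
    qed
    define s where "s = r - mm"
    have s: "r = s + mm" using ge unfolding mm_def s_def by simp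
    define X where "X = (if even mm then alt j k s else alt k j s)"
    have u2: "u = X @ alt j k mm" unfolding ua s X_def by (rule alt_add)
    have XI: "set X \<subseteq> I" unfolding X_def using alt_I[OF jk(2,3)] alt_I[OF jk(3,2)] by simp
    have e1: "eqv x u (X @ alt k j mm)" unfolding u2 mm_def by (rule eqv_app_right[OF rr.coxeter])
    obtain mm' where mm': "mm = Suc mm'" using m1 by (cases mm) auto
    have akj: "alt k j mm = alt j k mm' @ [k]" unfolding mm' by (rule alt_Suc_snoc)
    have e2: "eqv (rho k x) (u @ [k]) ((X @ alt j k mm' @ [k]) @ [k])"
    proof (rule eqv_app_left)
      show "eqv (T (rho k x) [k]) u (X @ alt j k mm' @ [k])" using e1 akj rho2[OF jk(3) x] by simp
    qed
    have e3: "eqv (rho k x) ((X @ alt j k mm') @ [k, k] @ []) ((X @ alt j k mm') @ [])"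
      by (rule eqv_cancel[OF rx _ jk(3)]) simp
    have e4: "eqv (rho k x) (u @ [k]) (X @ alt j k mm')" using eqv_trans[OF e2] e3 by simp
    have "set (X @ alt j k mm') \<subseteq> I" using XI alt_I[OF jk(2,3)] by simp
    hence "length (u @ [k]) \<le> length (X @ alt j k mm')" using r2 e4 unfolding red_def by blast
    moreover have "length u = length X + mm" using u2 by simp
    ultimately show False using mm' by simp
  qed
  have Pk: "(finite (Pl (rho k x) j k) \<longleftrightarrow> finite (Pl x j k)) \<and> card (Pl (rho k x) j k) = card (Pl x j k)"
    using Pl_step[OF x jk] by simp
  have c1: "card (N (rho k x) (alt k j (Suc r))) = Suc r"
  proof (rule CL[OF rx jk(1)[symmetric] jk(3,2)])
    show "infinite (Pl (rho k x) k j) \<or> Suc r \<le> card (Pl (rho k x) k j)"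
      using small Pk Pl_sym[of "rho k x" j k] by auto
  qed
  have c2: "card (N x u) = r" unfolding ua using CL[OF x jk] small by auto
  have au: "alt k j (Suc r) = u @ [k]" unfolding ua by (rule alt_Suc_snoc)
  have pos: "F x u (alpha k) \<in> Rp (T x u)"
  proof (rule ccontr)
    assume "F x u (alpha k) \<notin> Rp (T x u)"
    from snoc_neg_card[OF x uI jk(3) this] c1 c2 au show False by simp
  qed
  have "plane j k (F x u (alpha k))" using F_plane[OF us alpha_plane(2)] .
  moreover have "F x u (alpha k) j \<ge> 0" "F x u (alpha k) k \<ge> 0" using Rp_nn[OF pos] by auto
  ultimately show ?thesis using Pl_char[OF jk(1)] Rp_R[OF pos] by simp
qed

end


context rs begin

lemma H_main: "\<forall>x w k. length w = n \<longrightarrow> x \<in> A \<longrightarrow> red x w \<longrightarrow> k \<in> I \<longrightarrow> red (rho k x) (w @ [k])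
   \<longrightarrow> F x w (alpha k) \<in> Rp (T x w)"
proof (induction n rule: less_induct)
  case (less n)
  show ?case
  proof (intro allI impI)
    fix x w k
    assume len: "length w = n" and x: "x \<in> A" and rw: "red x w" and k: "k \<in> I"
      and rwk: "red (rho k x) (w @ [k])"
    have wI: "set w \<subseteq> I" using rw unfolding red_def by blast
    show "F x w (alpha k) \<in> Rp (T x w)"
    proof (cases w rule: rev_exhaust)
      case Nil thus ?thesis using alpha_Rp[OF x k] by simp
    next
      case (snoc ws j)
      have j: "j \<in> I" using wI snoc by simp
      have jk: "j \<noteq> k"
      proof
        assume jk: "j = k"
        have e: "eqv (rho k x) (ws @ [k, k] @ []) (ws @ [])"
          by (rule eqv_cancel[OF rhoA[OF k x] _ k]) simp
        have "set (ws @ []) \<subseteq> I" using wI snoc by simp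
        moreover have "eqv (rho k x) (w @ [k]) (ws @ [])" using e snoc jk by simp
        ultimately have "length (w @ [k]) \<le> length (ws @ [])" using rwk unfolding red_def by blast
        thus False using snoc by simp
      qed
      define S where "S = {(u, v). set u \<subseteq> {j,k} \<and> set v \<subseteq> I \<and> eqv x w (v @ u) \<and> length v + length u = n}"
      have inS: "([j], ws) \<in> S" unfolding S_def using snoc wI len eqv_refl by auto
      obtain uv where uvS: "uv \<in> S" and uvmin: "\<And>uv'. uv' \<in> S \<Longrightarrow> length (snd uv) \<le> length (snd uv')"
        using ex_has_least_nat[of "\<lambda>uv. uv \<in> S" "([j], ws)" "\<lambda>uv. length (snd uv)"] inS by blast
      obtain u v where uv: "uv = (u, v)" by (cases uv)
      have us: "set u \<subseteq> {j,k}" and vI: "set v \<subseteq> I" and ewvu: "eqv x w (v @ u)" and lvu: "length v + length u = n"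
        using uvS unfolding S_def uv by auto
      have min: "\<And>u' v'. (u', v') \<in> S \<Longrightarrow> length v \<le> length v'" using uvmin uv by fastforce
      have lv: "length v < n" using min[OF inS] len snoc by simp
      have uI: "set u \<subseteq> I" using us j k by auto
      have rvu: "red x (v @ u)" by (rule red_eqv[OF rw ewvu]) (use vI uI lvu len in auto)
      have ru: "red x u" using red_suffix[OF rvu] .
      define y where "y = T x u"
      have yA: "y \<in> A" unfolding y_def using T_A[OF x uI] .
      have rv: "red y v" unfolding y_def using red_prefix[OF rvu] .
      have ext: "red (rho l y) (v @ [l])" if l: "l \<in> {j,k}" for l
      proof (rule ccontr)
        assume nr: "\<not> red (rho l y) (v @ [l])"
        have lI: "l \<in> I" using l j k by auto
        obtain v' where v': "set v' \<subseteq> I" "Suc (length v') = length v" "eqv y v (v' @ [l])"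
          using red_snoc_not[OF yA lI rv nr] by blast
        have "eqv x (v @ u) ((v' @ [l]) @ u)" by (rule eqv_app_left) (use v'(3) y_def in simp)
        hence "eqv x w (v' @ (l # u))" using eqv_trans[OF ewvu] by simp
        hence "(l # u, v') \<in> S" unfolding S_def using us l v'(1) v'(2) lvu by auto
        hence "length v \<le> length v'" by (rule min)
        thus False using v'(2) by simp
      qed
      have Tw: "T x w = T y v" using ewvu unfolding eqv_def y_def by (simp add: T_append)
      have Fw: "F x w = F y v \<circ> F x u" using ewvu unfolding eqv_def y_def by (simp add: F_append)
      have IHj: "F y v (alpha j) \<in> Rp (T y v)"
        using less.IH[OF lv] yA rv j ext[of j] by blast
      have IHk: "F y v (alpha k) \<in> Rp (T y v)"
        using less.IH[OF lv] yA rv k ext[of k] by blast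
      have ruk: "red (rho k x) (u @ [k])"
      proof (rule ccontr)
        assume nr: "\<not> red (rho k x) (u @ [k])"
        obtain u' where u': "set u' \<subseteq> I" "Suc (length u') = length u" "eqv x u (u' @ [k])"
          using red_snoc_not[OF x k ru nr] by blast
        have e1: "eqv x w (v @ u' @ [k])" using eqv_trans[OF ewvu eqv_app_right[OF u'(3)]] by simp
        have e2: "eqv (rho k x) (w @ [k]) ((v @ u' @ [k]) @ [k])"
          by (rule eqv_app_left) (use e1 rho2[OF k x] in simp)
        have e3: "eqv (rho k x) ((v @ u') @ [k, k] @ []) ((v @ u') @ [])"
          by (rule eqv_cancel[OF rhoA[OF k x] _ k]) simp
        have e4: "eqv (rho k x) (w @ [k]) (v @ u')" using eqv_trans[OF e2] e3 by simp
        have "set (v @ u') \<subseteq> I" using vI u'(1) by simp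
        hence "length (w @ [k]) \<le> length (v @ u')" using rwk e4 unfolding red_def by blast
        thus False using u'(2) lvu len by simp
      qed
      have D: "F x u (alpha k) \<in> Pl y j k" unfolding y_def by (rule Dprime[OF x jk j k us ru ruk])
      have Dc: "plane j k (F x u (alpha k))" "F x u (alpha k) j \<ge> 0" "F x u (alpha k) k \<ge> 0"
        using D Pl_char[OF jk] by auto
      have de: "F x u (alpha k) = (\<lambda>l. F x u (alpha k) j * alpha j l + F x u (alpha k) k * alpha k l)"
        using plane_expand[OF jk Dc(1)] .
      have Fe: "F x w (alpha k) = (\<lambda>l. F x u (alpha k) j * F y v (alpha j) l + F x u (alpha k) k * F y v (alpha k) l)"
        unfolding Fw comp_apply by (subst de) (rule F_lin2)
      have nn: "0 \<le> F x w (alpha k) l" for l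
        unfolding Fe using Dc(2,3) Rp_nn[OF IHj, of l] Rp_nn[OF IHk, of l] by simp
      have "F x w (alpha k) \<in> F x w ` R x" using alpha_R[OF x k] by (rule imageI)
      hence inR: "F x w (alpha k) \<in> R (T x w)" using F_R[OF x wI] by simp
      show ?thesis by (rule Rp_I[OF inR nn])
    qed
  qed
qed

lemma K_main: assumes x: "x \<in> A" and w: "set w \<subseteq> I" and N0: "N x w = {}" shows "T x w = x"
proof -
  obtain w0 where w0: "red x w0" "eqv x w w0" using red_exists[OF w] by blast
  have N1: "N x w0 = {}" using eqv_N[OF w0(2)] N0 by simp
  show ?thesis
  proof (cases w0 rule: rev_exhaust)
    case Nil thus ?thesis using w0(2) unfolding eqv_def by simp
  next
    case (snoc ws k)
    have w0I: "set w0 \<subseteq> I" using w0(1) unfolding red_def by blast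
    have k: "k \<in> I" using w0I snoc by simp
    have rx: "rho k x \<in> A" using rhoA[OF k x] .
    have wsI: "set ws \<subseteq> I" using w0I snoc by simp
    have r1: "red (rho k x) ws" using red_prefix[of x ws "[k]"] w0(1) snoc by simp
    have r2: "red (rho k (rho k x)) (ws @ [k])" using w0(1) snoc rho2[OF k x] by simp
    have "F (rho k x) ws (alpha k) \<in> Rp (T (rho k x) ws)"
      using H_main rx r1 k r2 by blast
    hence "alpha k \<in> N (rho k (rho k x)) (ws @ [k])" by (rule snoc_pos_in_N[OF rx wsI k])
    hence "alpha k \<in> N x w0" using snoc rho2[OF k x] by simp
    thus ?thesis using N1 by simp
  qed
qed

end


context rs begin

lemma W_to: "(b, f, a) \<in> weyl_morphisms I A rho C \<Longrightarrow> a \<in> A \<and> (\<exists>w. set w \<subseteq> I \<and> b = T a w \<and> f = F a w)"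
proof (induction rule: weyl_morphisms.induct)
  case (idm a)
  thus ?case by (auto intro!: exI[of _ "[]"])
next
  case (step b f a i)
  then obtain w where w: "set w \<subseteq> I" "b = T a w" "f = F a w" by auto
  have "set (i # w) \<subseteq> I \<and> rho i b = T a (i # w) \<and> sigma I C i b \<circ> f = F a (i # w)" using w step by simp
  thus ?case using step by blast
qed

lemma W_from: "a \<in> A \<Longrightarrow> set w \<subseteq> I \<Longrightarrow> (T a w, F a w, a) \<in> weyl_morphisms I A rho C"
proof (induction w)
  case Nil
  have "(a, id, a) \<in> weyl_morphisms I A rho C" by (rule weyl_morphisms.idm) (use Nil in simp)
  thus ?case by (simp only: tgt.simps fn.simps)
next
  case (Cons i w)
  hence "(T a w, F a w, a) \<in> weyl_morphisms I A rho C" "i \<in> I" by auto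
  from weyl_morphisms.step[OF this] show ?case by (simp only: tgt.simps fn.simps)
qed

lemma W_char: "(b, f, a) \<in> weyl_morphisms I A rho C \<longleftrightarrow> a \<in> A \<and> (\<exists>w. set w \<subseteq> I \<and> b = T a w \<and> f = F a w)"
  using W_to[of b f a] W_from by auto

lemma conn_word: assumes "(a, b) \<in> {(x, rho i x) | x i. x \<in> A \<and> i \<in> I}\<^sup>*" "a \<in> A"
  shows "\<exists>w. set w \<subseteq> I \<and> T a w = b"
  using assms(1)
proof (induction rule: rtrancl_induct)
  case base thus ?case by (auto intro!: exI[of _ "[]"])
next
  case (step b c)
  then obtain w where w: "set w \<subseteq> I" "T a w = b" by blast
  from step(2) obtain i where i: "i \<in> I" "c = rho i b" by blast
  have "set (i # w) \<subseteq> I \<and> T a (i # w) = c" using w i by simp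
  thus ?case by blast
qed

lemma R_word_finite: assumes "a \<in> A" "set w \<subseteq> I" "finite (R a)" shows "finite (R (T a w))"
  using F_R[OF assms(1,2)] assms(3) by (metis finite_imageI)

lemma real_sub: assumes a: "a \<in> A" shows "real_roots I A rho C a \<subseteq> R a"
proof
  fix v assume "v \<in> real_roots I A rho C a"
  then obtain f b i where v: "v = f (alpha i)" "b \<in> A" "(a, f, b) \<in> Hom I A rho C b a" "i \<in> I"
    unfolding real_roots_def by blast
  have "(a, f, b) \<in> weyl_morphisms I A rho C" using v(3) unfolding Hom_def by simp
  then obtain w where w: "set w \<subseteq> I" "a = T b w" "f = F b w" using W_char by blast
  have "F b w (alpha i) \<in> F b w ` R b" using alpha_R[OF v(2) v(4)] by (rule imageI)
  thus "v \<in> R a" using F_R[OF v(2) w(1)] v(1) w by simp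
qed


lemma fin_all: assumes con: "connected_cs I A rho" and a: "a \<in> A" and f: "finite (R a)" and b: "b \<in> A"
  shows "finite (R b)"
proof -
  have "(a, b) \<in> {(x, rho i x) | x i. x \<in> A \<and> i \<in> I}\<^sup>*" using con a b unfolding connected_cs_def by blast
  then obtain w where w: "set w \<subseteq> I" "T a w = b" using conn_word a by blast
  show ?thesis using R_word_finite[OF a w(1) f] w(2) by simp
qed

definition Fs where "Fs a = {f. \<exists>b w. b \<in> A \<and> set w \<subseteq> I \<and> T b w = a \<and> F b w = f}"

lemma Fs_fin: assumes a: "a \<in> A" and fr: "finite (real_roots I A rho C a)" shows "finite (Fs a)"
proof -
  define h where "h = (\<lambda>f::('i\<Rightarrow>int)\<Rightarrow>('i\<Rightarrow>int). restrict (\<lambda>l. f (alpha l)) I)"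
  have inj: "inj_on h (Fs a)"
  proof (rule inj_onI)
    fix f f' assume f: "f \<in> Fs a" and f': "f' \<in> Fs a" and e: "h f = h f'"
    obtain b w where bw: "b \<in> A" "set w \<subseteq> I" "T b w = a" "F b w = f" using f unfolding Fs_def by blast
    obtain b' w' where bw': "b' \<in> A" "set w' \<subseteq> I" "T b' w' = a" "F b' w' = f'" using f' unfolding Fs_def by blast
    have "F b w (alpha l) = F b' w' (alpha l)" if l: "l \<in> I" for l
      using fun_cong[OF e, of l] l bw bw' unfolding h_def by simp
    hence "F b w = F b' w'" using F_det[OF bw(2) bw'(2)] by blast
    thus "f = f'" using bw bw' by simp
  qed
  have sub: "h ` Fs a \<subseteq> PiE I (\<lambda>_. real_roots I A rho C a)"
  proof
    fix g assume "g \<in> h ` Fs a"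
    then obtain f where f: "f \<in> Fs a" "g = h f" by blast
    obtain b w where bw: "b \<in> A" "set w \<subseteq> I" "T b w = a" "F b w = f" using f unfolding Fs_def by blast
    have W: "(a, f, b) \<in> weyl_morphisms I A rho C" using W_from[OF bw(1,2)] bw by simp
    have "f (alpha l) \<in> real_roots I A rho C a" if l: "l \<in> I" for l
      unfolding real_roots_def Hom_def using W bw(1) l by blast
    thus "g \<in> PiE I (\<lambda>_. real_roots I A rho C a)" unfolding f(2) h_def by auto
  qed
  have "finite (PiE I (\<lambda>_. real_roots I A rho C a))" by (rule finite_PiE[OF finI fr])
  thus ?thesis using inj_on_finite[OF inj sub] by blast
qed

lemma K2: assumes b: "b \<in> A" and b': "b' \<in> A" and w: "set w \<subseteq> I" and w': "set w' \<subseteq> I"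
  and t: "T b w = T b' w'" and f: "F b w = F b' w'" shows "b = b'"
proof -
  define u where "u = rev w' @ w"
  have uI: "set u \<subseteq> I" unfolding u_def using w w' by auto
  have Tu: "T b u = b'" unfolding u_def T_append t using T_rev[OF b' w'] .
  have Fu: "F b u = id"
  proof (rule ext)
    fix v
    have "F b u v = F (T b' w') (rev w') (F b' w' v)" unfolding u_def F_append t using f by simp
    thus "F b u v = id v" using F_rev_ap[OF b' w'] by simp
  qed
  have "R b' = R b" using F_R[OF b uI] Tu Fu by simp
  hence "Rp b' = Rp b" unfolding Rp_def by simp
  hence "N b u = {}" unfolding N_def Tu Fu by simp
  hence "T b u = b" using K_main[OF b uI] by blast
  thus ?thesis using Tu by simp
qed

lemma A_fin: assumes con: "connected_cs I A rho" and fr: "\<forall>a\<in>A. finite (real_roots I A rho C a)"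
  shows "finite A"
proof -
  obtain a0 where a0: "a0 \<in> A" using Ane by blast
  have ex: "\<exists>w. set w \<subseteq> I \<and> T b w = a0" if b: "b \<in> A" for b
  proof -
    have "(b, a0) \<in> {(x, rho i x) | x i. x \<in> A \<and> i \<in> I}\<^sup>*" using con a0 b unfolding connected_cs_def by blast
    thus ?thesis using conn_word b by blast
  qed
  define ww where "ww b = (SOME w. set w \<subseteq> I \<and> T b w = a0)" for b
  have ww: "set (ww b) \<subseteq> I \<and> T b (ww b) = a0" if "b \<in> A" for b
    unfolding ww_def using someI_ex[OF ex[OF that]] .
  define g where "g b = F b (ww b)" for b
  have inj: "inj_on g A"
  proof (rule inj_onI)
    fix b b' assume b: "b \<in> A" and b': "b' \<in> A" and e: "g b = g b'"
    show "b = b'" by (rule K2[OF b b']) (use ww[OF b] ww[OF b'] e g_def in auto)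
  qed
  have sub: "g ` A \<subseteq> Fs a0" unfolding Fs_def g_def using ww by blast
  show ?thesis using inj_on_finite[OF inj sub Fs_fin[OF a0]] fr a0 by blast
qed

lemma three_four: assumes con: "connected_cs I A rho" and fr: "\<forall>a\<in>A. finite (real_roots I A rho C a)"
  shows "finite (weyl_morphisms I A rho C)"
proof -
  have fA: "finite A" using A_fin[OF con fr] .
  have sub: "weyl_morphisms I A rho C \<subseteq> A \<times> (\<Union>a\<in>A. Fs a) \<times> A"
  proof
    fix m assume m: "m \<in> weyl_morphisms I A rho C"
    obtain b f a where bfa: "m = (b, f, a)" by (cases m) auto
    then obtain w where w: "a \<in> A" "set w \<subseteq> I" "b = T a w" "f = F a w" using m W_char by auto
    have bA: "b \<in> A" using T_A[OF w(1,2)] w(3) by simp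
    have "f \<in> Fs b" unfolding Fs_def using w by blast
    thus "m \<in> A \<times> (\<Union>a\<in>A. Fs a) \<times> A" using bfa bA w(1) by blast
  qed
  have "finite (\<Union>a\<in>A. Fs a)" using fA Fs_fin fr by blast
  hence "finite (A \<times> (\<Union>a\<in>A. Fs a) \<times> A)" using fA by simp
  thus ?thesis using finite_subset[OF sub] by blast
qed


lemma four_two: assumes fW: "finite (weyl_morphisms I A rho C)" shows "\<exists>a\<in>A. finite (R a)"
proof -
  obtain a where a: "a \<in> A" using Ane by blast
  define Nm where "Nm m = (case m of (b, f, a') \<Rightarrow> {\<alpha> \<in> Rp a'. f \<alpha> \<notin> Rp b})" for m
  define K where "K = {card (N a w) | w. set w \<subseteq> I}"
  have KW: "K \<subseteq> (\<lambda>m. card (Nm m)) ` weyl_morphisms I A rho C"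
  proof
    fix n assume "n \<in> K"
    then obtain w where w: "set w \<subseteq> I" "n = card (N a w)" unfolding K_def by blast
    have "N a w = Nm (T a w, F a w, a)" unfolding Nm_def N_def by simp
    hence "n = card (Nm (T a w, F a w, a))" using w(2) by simp
    thus "n \<in> (\<lambda>m. card (Nm m)) ` weyl_morphisms I A rho C" using W_from[OF a w(1)] by (rule image_eqI)
  qed
  have fK: "finite K" using finite_subset[OF KW] fW by blast
  have neK: "K \<noteq> {}" unfolding K_def by (auto intro!: exI[of _ "[]"])
  obtain w0 where w0: "set w0 \<subseteq> I" "card (N a w0) = Max K" using Max_in[OF fK neK] unfolding K_def by auto
  have neg: "\<exists>\<gamma>\<in>Rp a. F a w0 \<gamma> = - alpha k" if k: "k \<in> I" for k
  proof -
    have "\<not> (\<exists>\<gamma>\<in>Rp a. F a w0 \<gamma> = alpha k)"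
    proof
      assume "\<exists>\<gamma>\<in>Rp a. F a w0 \<gamma> = alpha k"
      then obtain \<gamma> where g: "\<gamma> \<in> Rp a" "F a w0 \<gamma> = alpha k" by blast
      have c: "card (N a (k # w0)) = Suc (Max K)" using card_plus[OF a w0(1) k g] w0(2) by simp
      have "card (N a (k # w0)) \<in> K" unfolding K_def using w0(1) k by (auto intro!: exI[of _ "k # w0"])
      hence "card (N a (k # w0)) \<le> Max K" using Max_ge[OF fK] by blast
      thus False using c by simp
    qed
    thus ?thesis using step_cases[OF a w0(1) k] by blast
  qed
  obtain gam where gam: "\<And>k. k \<in> I \<Longrightarrow> gam k \<in> Rp a \<and> F a w0 (gam k) = - alpha k"
    using neg by metis
  define b where "b = T a w0"
  have bA: "b \<in> A" unfolding b_def using T_A[OF a w0(1)] .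
  have sub: "Rp b \<subseteq> (\<lambda>\<delta>. - F a w0 \<delta>) ` N a w0"
  proof
    fix \<beta> assume bt: "\<beta> \<in> Rp b"
    define \<delta> where "\<delta> = (\<lambda>k'. \<Sum>l\<in>I. \<beta> l * gam l k')"
    have "F a w0 \<delta> = (\<lambda>k'. \<Sum>l\<in>I. F a w0 (smul (\<beta> l) (gam l)) k')"
      unfolding \<delta>_def using F_sum[OF finI, of a w0 "\<lambda>l. smul (\<beta> l) (gam l)"] by (simp add: smul_def)
    also have "\<dots> = (\<lambda>k'. \<Sum>l\<in>I. \<beta> l * (- alpha l k'))"
    proof (rule ext, rule sum.cong)
      fix k' l assume l: "l \<in> I"
      have "F a w0 (smul (\<beta> l) (gam l)) = smul (\<beta> l) (- alpha l)" by (simp only: F_smul gam[OF l])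
      thus "F a w0 (smul (\<beta> l) (gam l)) k' = \<beta> l * (- alpha l k')" by (simp add: smul_def)
    qed simp
    also have "\<dots> = - \<beta>"
    proof (rule ext)
      fix k'
      have "(\<Sum>l\<in>I. \<beta> l * (- alpha l k')) = - (\<Sum>l\<in>I. \<beta> l * alpha l k')" by (simp add: sum_negf)
      also have "(\<Sum>l\<in>I. \<beta> l * alpha l k') = (if k' \<in> I then \<beta> k' else 0)"
        using fun_cong[OF vec_decomp[of \<beta>], of k'] by simp
      also have "\<dots> = \<beta> k'" using RZI[OF bA Rp_R[OF bt]] by auto
      finally show "(\<Sum>l\<in>I. \<beta> l * (- alpha l k')) = (- \<beta>) k'" by simp
    qed
    finally have Fd: "F a w0 \<delta> = - \<beta>" .
    have dnn: "0 \<le> \<delta> k'" for k'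
      unfolding \<delta>_def
    proof (rule sum_nonneg)
      fix l assume l: "l \<in> I"
      have "0 \<le> gam l k'" using gam[OF l] Rp_nn by blast
      thus "0 \<le> \<beta> l * gam l k'" using Rp_nn[OF bt, of l] by simp
    qed
    have "- \<beta> \<in> R b" using R_neg[OF bA Rp_R[OF bt]] .
    then obtain \<delta>' where d': "\<delta>' \<in> R a" "F a w0 \<delta>' = - \<beta>" using F_R[OF a w0(1)] unfolding b_def by (metis imageE)
    have "\<delta>' = \<delta>" using F_inj[OF a w0(1)] d'(2) Fd by (metis injD)
    hence dR: "\<delta> \<in> Rp a" using d'(1) dnn by (auto intro: Rp_I)
    have "- \<beta> \<notin> Rp b" using Rp_neg_not[OF bA bt] by blast
    hence "\<delta> \<in> N a w0" unfolding N_def using dR Fd b_def by simp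
    moreover have "\<beta> = - F a w0 \<delta>" using Fd by simp
    ultimately show "\<beta> \<in> (\<lambda>\<delta>. - F a w0 \<delta>) ` N a w0" by blast
  qed
  have "finite (Rp b)" using finite_subset[OF sub] N_finite[OF a w0(1)] by blast
  hence "finite (R b)" using R1[OF bA] by simp
  thus ?thesis using bA by blast
qed

end

theorem lemma2p11:
  fixes I :: "'i set" and A :: "'a set" and rho :: "'i \<Rightarrow> 'a \<Rightarrow> 'a"
    and C :: "'a \<Rightarrow> 'i \<Rightarrow> 'i \<Rightarrow> int" and R :: "'a \<Rightarrow> ('i \<Rightarrow> int) set"
  assumes "cartan_scheme I A rho C"
    and "connected_cs I A rho"
    and "root_system I A rho C R"
  shows "((\<forall>a\<in>A. finite (R a)) \<longleftrightarrow> (\<exists>a\<in>A. finite (R a)))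
       \<and> ((\<exists>a\<in>A. finite (R a)) \<longleftrightarrow> (\<forall>a\<in>A. finite (real_roots I A rho C a)))
       \<and> ((\<forall>a\<in>A. finite (real_roots I A rho C a)) \<longleftrightarrow> finite (weyl_morphisms I A rho C))"
proof -
  interpret rs I A rho C R by unfold_locales (rule assms(3))
  have p12: "(\<forall>a\<in>A. finite (R a)) \<Longrightarrow> (\<exists>a\<in>A. finite (R a))" using Ane by blast
  have p21: "(\<exists>a\<in>A. finite (R a)) \<Longrightarrow> (\<forall>a\<in>A. finite (R a))" using fin_all[OF assms(2)] by blast
  have p13: "(\<forall>a\<in>A. finite (R a)) \<Longrightarrow> (\<forall>a\<in>A. finite (real_roots I A rho C a))"
    using real_sub finite_subset by blast
  have p34: "(\<forall>a\<in>A. finite (real_roots I A rho C a)) \<Longrightarrow> finite (weyl_morphisms I A rho C)"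
    using three_four[OF assms(2)] by blast
  have p42: "finite (weyl_morphisms I A rho C) \<Longrightarrow> (\<exists>a\<in>A. finite (R a))" using four_two by blast
  show ?thesis using p12 p21 p13 p34 p42 by blast
qed


end
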